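(* Assume the setting below. Let $\theta,\theta':\mathbb{Z}\to[0,1]$ be finitely supported and not identically zero, with $a=\min\{z:\theta(z)\neq0\}$, $b=\max\{z:\theta(z)\neq0\}$, $a'=\min\{z:\theta'(z)\neq0\}$, $b'=\max\{z:\theta'(z)\neq0\}$, and suppose $b-a=b'-a'=\ell$. If $p^{\theta}_{\mathbf{t}}=p^{\theta'}_{\mathbf{t}}$ for every $k\in\mathbb{N}$ and every $\mathbf{t}\in\mathbb{N}^k$, then $$(\theta'(a'),\theta'(a'+1),\dots,\theta'(b'))\in\big\{(\theta(a),\theta(a+1),\dots,\theta(b)),\ (\theta(b),\theta(b-1),\dots,\theta(a))\big\}.$$ That is, given $\ell$, the unordered pair of the sequence $(\theta(a),\dots,\theta(b))$ and its reversal is uniquely determined by the quantities $\{p^\theta_{\mathbf{t}}\}$.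
   Context: Setting: $q$ is a probability mass function on $\mathbb{Z}$ with $\sum_z zq(z)=0$, $\sum_z z^2q(z)<\infty$, $q(z)=q(-z)$ for all $z$, $\gcd\{n\ge1:q^{*n}(0)>0\}=1$, and support generating $\mathbb{Z}$; $S$ is the random walk with increment law $q$. For a bias function $\theta:\mathbb{Z}\to[0,1]$, the coin-toss observations are $\{-1,1\}$-valued $X_n$ which, conditionally on $S$, are independent with $E[X_n\mid S]=\theta(S_n)$. For $\mathbf{t}=(t_1,\dots,t_k)\in\mathbb{N}^k$, $$p^\theta_{\mathbf{t}}=\sum_{z\in\mathbb{Z}}E\big[X_0X_{t_1}X_{t_1+t_2}\cdots X_{t_1+\cdots+t_k}\,\big|\,S_0=z\big]$$ computed for the observations from $\theta$. *)

theory Defs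
  imports "HOL-Probability.Probability"
begin

text \<open>n-fold convolution power of an increment law q on the integers:
  the law of S_n - S_0 for the random walk with increments q.\<close>
primrec conv_pow :: "int pmf \<Rightarrow> nat \<Rightarrow> int pmf" where
  "conv_pow q 0 = return_pmf 0"
| "conv_pow q (Suc n) = bind_pmf (conv_pow q n) (\<lambda>x. map_pmf (\<lambda>y. x + y) q)"

definition walk_at :: "int pmf \<Rightarrow> int \<Rightarrow> nat \<Rightarrow> int pmf" where
  "walk_at q z n = map_pmf (\<lambda>y. z + y) (conv_pow q n)"

inductive_set int_subgroup_gen :: "int set \<Rightarrow> int set" for A where
  base: "x \<in> A \<Longrightarrow> x \<in> int_subgroup_gen A"
| zero: "0 \<in> int_subgroup_gen A"
| add: "x \<in> int_subgroup_gen A \<Longrightarrow> y \<in> int_subgroup_gen A \<Longrightarrow> x + y \<in> int_subgroup_gen A"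
| neg: "x \<in> int_subgroup_gen A \<Longrightarrow> - x \<in> int_subgroup_gen A"

definition good_increment :: "int pmf \<Rightarrow> bool" where
  "good_increment q \<longleftrightarrow>
     integrable (measure_pmf q) (\<lambda>z. (real_of_int z)\<^sup>2) \<and>
     integrable (measure_pmf q) (\<lambda>z. real_of_int z) \<and>
     measure_pmf.expectation q (\<lambda>z. real_of_int z) = 0 \<and>
     (\<forall>z. pmf q z = pmf q (- z)) \<and>
     Gcd {n::nat. n \<ge> 1 \<and> pmf (conv_pow q n) 0 > 0} = 1 \<and>
     int_subgroup_gen (set_pmf q) = UNIV"

text \<open>E[X_{s_0} X_{s_1} ... X_{s_k} | S_0 = z] where s_0 = 0 and consecutive gaps are
  given by the list t (all gaps \<ge> 1, so times are distinct).  Conditionally on S the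
  coins are independent with E[X_n | S] = theta(S_n), so the conditional expectation
  given S is the product of theta(S_{s_j}); averaging over the walk via the Markov
  property gives the recursion below.\<close>
fun coin_corr :: "int pmf \<Rightarrow> (int \<Rightarrow> real) \<Rightarrow> int \<Rightarrow> nat list \<Rightarrow> real" where
  "coin_corr q \<theta> z [] = \<theta> z"
| "coin_corr q \<theta> z (t # ts) =
     \<theta> z * measure_pmf.expectation (walk_at q z t) (\<lambda>y. coin_corr q \<theta> y ts)"

definition p_theta :: "int pmf \<Rightarrow> (int \<Rightarrow> real) \<Rightarrow> nat list \<Rightarrow> real" where
  "p_theta q \<theta> t = (\<Sum>\<^sub>\<infinity>z\<in>UNIV. coin_corr q \<theta> z t)"

end

theory Submission
  imports Defs
begin



lemma exp_bind_bounded: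
 fixes f :: "'b \<Rightarrow> real"
 assumes "\<And>x. \<bar>f x\<bar> \<le> B"
 shows "measure_pmf.expectation (bind_pmf p N) f = measure_pmf.expectation p (\<lambda>x. measure_pmf.expectation (N x) f)"
 unfolding measure_pmf_bind
 apply (rule integral_bind[where K="count_space UNIV" and B=B and B'=1])
 using assms by (auto simp: measure_pmf.emeasure_space_1 prob_space_imp_subprob_space measure_pmf_in_subprob_algebra)

lemma pmf_map_uminus: "pmf (map_pmf uminus p) (z::int) = pmf p (- z)"
proof -
  have "pmf (map_pmf uminus p) (uminus (-z)) = pmf p (-z)"
    by (rule pmf_map_inj') (auto intro: injI)
  thus ?thesis by simp
qed

lemma q_sym_map:
  assumes "\<forall>z. pmf q z = pmf q (- z)"
  shows "map_pmf uminus q = (q :: int pmf)"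
  by (rule pmf_eqI) (use assms in \<open>simp add: pmf_map_uminus\<close>)

lemma conv_sym_map:
  assumes "\<forall>z. pmf q z = pmf q (- z)"
  shows "map_pmf uminus (conv_pow q n) = conv_pow q n"
proof (induction n)
  case 0
  then show ?case by simp
next
  case (Suc n)
  have qs: "map_pmf uminus q = q" using q_sym_map[OF assms] .
  have "map_pmf uminus (conv_pow q (Suc n)) =
        bind_pmf (conv_pow q n) (\<lambda>x. map_pmf (\<lambda>y. - (x + y)) q)"
    by (simp add: map_bind_pmf map_pmf_comp o_def)
  also have "\<dots> = bind_pmf (conv_pow q n) (\<lambda>x. map_pmf (\<lambda>y. - x + y) q)"
  proof -
    have "map_pmf (\<lambda>y. - (x + y)) q = map_pmf (\<lambda>y. - x + y) q" for x
    proof -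
      have "map_pmf (\<lambda>y. - x + y) q = map_pmf (\<lambda>y. - x + y) (map_pmf uminus q)" using qs by simp
      also have "\<dots> = map_pmf (\<lambda>y. - (x + y)) q"
        apply (simp only: map_pmf_comp o_def) by (rule map_pmf_cong) auto
      finally show ?thesis by simp
    qed
    thus ?thesis by simp
  qed
  also have "\<dots> = bind_pmf (map_pmf uminus (conv_pow q n)) (\<lambda>x. map_pmf (\<lambda>y. x + y) q)"
    apply (simp add: bind_map_pmf) by (intro bind_pmf_cong refl map_pmf_cong) auto
  also have "\<dots> = conv_pow q (Suc n)" using Suc by simp
  finally show ?case .
qed

lemma conv_sym:
  assumes "\<forall>z. pmf q z = pmf q (- z)"
  shows "pmf (conv_pow q n) (- z) = pmf (conv_pow q n) z"
  by (metis conv_sym_map[OF assms] pmf_map_uminus)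

fun Mc :: "(int \<Rightarrow> real) \<Rightarrow> int \<Rightarrow> (int \<Rightarrow> real) list \<Rightarrow> int \<Rightarrow> real" where
  "Mc \<theta> L [] z = \<theta> z"
| "Mc \<theta> L (k # ks) z = \<theta> z * (\<Sum>j\<in>{-L..L}. k j * Mc \<theta> L ks (z + j))"

definition Mt :: "(int \<Rightarrow> real) \<Rightarrow> int \<Rightarrow> (int \<Rightarrow> real) list \<Rightarrow> real" where
  "Mt \<theta> L ks = (\<Sum>z\<in>{z. \<theta> z \<noteq> 0}. Mc \<theta> L ks z)"

lemma Mc_zero: "\<theta> z = 0 \<Longrightarrow> Mc \<theta> L ks z = 0"
  by (cases ks) auto

lemma coin_zero: "\<theta> z = 0 \<Longrightarrow> coin_corr q \<theta> z ts = 0"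
  by (cases ts) auto

definition window :: "(int \<Rightarrow> real) \<Rightarrow> int \<Rightarrow> bool" where
  "window \<theta> L \<longleftrightarrow> (\<forall>z w. \<theta> z \<noteq> 0 \<longrightarrow> \<theta> w \<noteq> 0 \<longrightarrow> \<bar>z - w\<bar> \<le> L)"

lemma coin_Mc:
  assumes "window \<theta> L"
  shows "coin_corr q \<theta> z ts = Mc \<theta> L (map (\<lambda>t. pmf (conv_pow q t)) ts) z"
proof (induction ts arbitrary: z)
  case Nil
  then show ?case by simp
next
  case (Cons t ts)
  show ?case
  proof (cases "\<theta> z = 0")
    case True
    then show ?thesis by (simp add: coin_zero Mc_zero)
  next
    case False
    have "measure_pmf.expectation (walk_at q z t) (\<lambda>y. coin_corr q \<theta> y ts)
        = measure_pmf.expectation (conv_pow q t) (\<lambda>y. coin_corr q \<theta> (z + y) ts)"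
      by (simp add: walk_at_def)
    also have "\<dots> = (\<Sum>j\<in>{-L..L}. coin_corr q \<theta> (z + j) ts * pmf (conv_pow q t) j)"
    proof (rule integral_measure_pmf_real)
      fix a assume "coin_corr q \<theta> (z + a) ts \<noteq> 0"
      hence "\<theta> (z + a) \<noteq> 0" using coin_zero by metis
      hence "\<bar>z + a - z\<bar> \<le> L" using assms False unfolding window_def by blast
      thus "a \<in> {-L..L}" by auto
    qed simp
    also have "\<dots> = (\<Sum>j\<in>{-L..L}. pmf (conv_pow q t) j * Mc \<theta> L (map (\<lambda>t. pmf (conv_pow q t)) ts) (z + j))"
      using Cons by (simp add: mult.commute)
    finally show ?thesis by simp
  qed
qed

lemma p_theta_Mt:
  assumes "window \<theta> L" "finite {z. \<theta> z \<noteq> 0}"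
  shows "p_theta q \<theta> ts = Mt \<theta> L (map (\<lambda>t. pmf (conv_pow q t)) ts)"
proof -
  have "p_theta q \<theta> ts = (\<Sum>\<^sub>\<infinity>z\<in>{z. \<theta> z \<noteq> 0}. coin_corr q \<theta> z ts)"
    unfolding p_theta_def
    by (rule infsum_cong_neutral) (auto simp: coin_zero)
  also have "\<dots> = (\<Sum>z\<in>{z. \<theta> z \<noteq> 0}. coin_corr q \<theta> z ts)"
    using assms(2) by simp
  finally show ?thesis unfolding Mt_def using coin_Mc[OF assms(1)] by simp
qed

lemma Mc_lin:
  "Mc \<theta> L (fs @ (\<lambda>j. a * k1 j + b * k2 j) # gs) z
    = a * Mc \<theta> L (fs @ k1 # gs) z + b * Mc \<theta> L (fs @ k2 # gs) z"
proof (induction fs arbitrary: z)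
  case Nil
  then show ?case
    by (simp add: sum.distrib sum_distrib_left algebra_simps)
next
  case (Cons f fs)
  then show ?case
    by (simp add: sum.distrib sum_distrib_left algebra_simps)
qed

lemma Mt_lin:
  "Mt \<theta> L (fs @ (\<lambda>j. a * k1 j + b * k2 j) # gs)
    = a * Mt \<theta> L (fs @ k1 # gs) + b * Mt \<theta> L (fs @ k2 # gs)"
  unfolding Mt_def by (simp add: Mc_lin sum.distrib sum_distrib_left)

inductive_set kspan :: "int pmf \<Rightarrow> (int \<Rightarrow> real) set" for q where
  base: "n \<ge> 1 \<Longrightarrow> pmf (conv_pow q n) \<in> kspan q"
| lin: "k1 \<in> kspan q \<Longrightarrow> k2 \<in> kspan q \<Longrightarrow> (\<lambda>j. a * k1 j + b * k2 j) \<in> kspan q"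

lemma Mt_kspan:
  assumes eq: "\<And>ts. ts \<noteq> [] \<Longrightarrow> (\<forall>i\<in>set ts. i \<ge> 1) \<Longrightarrow>
     Mt \<theta> L (map (\<lambda>t. pmf (conv_pow q t)) ts) = Mt \<theta>' L' (map (\<lambda>t. pmf (conv_pow q t)) ts)"
  shows "set gs \<subseteq> kspan q \<Longrightarrow> (\<forall>i\<in>set ts. i \<ge> 1) \<Longrightarrow> ts \<noteq> [] \<or> gs \<noteq> [] \<Longrightarrow>
     Mt \<theta> L (map (\<lambda>t. pmf (conv_pow q t)) ts @ gs) = Mt \<theta>' L' (map (\<lambda>t. pmf (conv_pow q t)) ts @ gs)"
proof (induction gs arbitrary: ts)
  case Nil
  then show ?case using eq by simp
next
  case (Cons g gs)
  have "g \<in> kspan q" using Cons.prems by simp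
  then show ?case
  proof (induction rule: kspan.induct)
    case (base n)
    have "Mt \<theta> L (map (\<lambda>t. pmf (conv_pow q t)) (ts @ [n]) @ gs) = Mt \<theta>' L' (map (\<lambda>t. pmf (conv_pow q t)) (ts @ [n]) @ gs)"
      by (rule Cons.IH) (use Cons.prems base in auto)
    then show ?case by simp
  next
    case (lin k1 k2 a b)
    then show ?case by (simp add: Mt_lin)
  qed
qed

lemma Mc_cong:
  "list_all2 (\<lambda>k k'. \<forall>j\<in>{-L..L}. k j = k' j) ks ks' \<Longrightarrow> Mc \<theta> L ks z = Mc \<theta> L ks' z"
proof (induction ks arbitrary: ks' z)
  case Nil
  then show ?case by simp
next
  case (Cons k ks)
  then obtain k' ks'' where ks': "ks' = k' # ks''" by (cases ks') auto
  with Cons show ?case by (auto intro!: sum.cong)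
qed

lemma Mt_cong:
  "list_all2 (\<lambda>k k'. \<forall>j\<in>{-L..L}. k j = k' j) ks ks' \<Longrightarrow> Mt \<theta> L ks = Mt \<theta> L ks'"
  unfolding Mt_def by (intro sum.cong refl Mc_cong)




inductive_set lspan :: "(nat \<Rightarrow> real) set \<Rightarrow> (nat \<Rightarrow> real) set" for V where
  base: "v \<in> V \<Longrightarrow> v \<in> lspan V"
| lin: "u \<in> lspan V \<Longrightarrow> w \<in> lspan V \<Longrightarrow> (\<lambda>i. a * u i + b * w i) \<in> lspan V"

lemma LA:
  "V \<noteq> {} \<Longrightarrow> (\<forall>c. (\<forall>v\<in>V. (\<Sum>i<n. c i * v i) = 0) \<longrightarrow> (\<forall>i<n. c i = 0))
   \<Longrightarrow> \<exists>w\<in>lspan V. \<forall>i<n. u i = w i"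
proof (induction n arbitrary: V u)
  case 0
  then obtain v where "v \<in> V" by auto
  then show ?case by (auto intro: lspan.base)
next
  case (Suc n)
  obtain v0 where v0: "v0 \<in> V" "v0 n \<noteq> 0"
  proof (rule ccontr)
    assume "\<not> thesis"
    hence allz: "\<forall>v\<in>V. v n = 0" using that by blast
    let ?c = "\<lambda>i. if i = n then (1::real) else 0"
    have "\<forall>v\<in>V. (\<Sum>i<Suc n. ?c i * v i) = 0"
      using allz by (simp add: sum.If_cases)
    hence "\<forall>i<Suc n. ?c i = 0" using spec[OF Suc.prems(2), of ?c] by blast
    hence "?c n = 0" by blast
    thus False by simp
  qed
  define V' where "V' = (\<lambda>v i. v i - (v n / v0 n) * v0 i) ` V"
  have V'ne: "V' \<noteq> {}" using Suc.prems(1) unfolding V'_def by auto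
  have H': "\<forall>c. (\<forall>v\<in>V'. (\<Sum>i<n. c i * v i) = 0) \<longrightarrow> (\<forall>i<n. c i = 0)"
  proof (rule allI, rule impI)
    fix c assume hc: "\<forall>v\<in>V'. (\<Sum>i<n. c i * v i) = 0"
    define S where "S = (\<Sum>i<n. c i * v0 i)"
    define c' where "c' = (\<lambda>i. if i < n then c i else - S / v0 n)"
    have "\<forall>v\<in>V. (\<Sum>i<Suc n. c' i * v i) = 0"
    proof
      fix v assume vV: "v \<in> V"
      have "(\<Sum>i<n. c i * (v i - (v n / v0 n) * v0 i)) = 0"
        using hc vV unfolding V'_def by auto
      hence e1: "(\<Sum>i<n. c i * v i) = (v n / v0 n) * S"
        unfolding S_def by (simp add: algebra_simps sum_subtractf sum_distrib_left)
      have "(\<Sum>i<Suc n. c' i * v i) = (\<Sum>i<n. c i * v i) + c' n * v n"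
        by (simp add: c'_def)
      also have "\<dots> = 0" using e1 v0(2) by (simp add: c'_def field_simps)
      finally show "(\<Sum>i<Suc n. c' i * v i) = 0" .
    qed
    hence "\<forall>i<Suc n. c' i = 0" using Suc.prems(2) by blast
    thus "\<forall>i<n. c i = 0" unfolding c'_def by (metis less_SucI)
  qed
  define u' where "u' = (\<lambda>i. u i - (u n / v0 n) * v0 i)"
  obtain w' where w': "w' \<in> lspan V'" "\<forall>i<n. u' i = w' i"
    using Suc.IH[OF V'ne H'] by blast
  have key: "w \<in> lspan V \<and> w n = 0" if "w \<in> lspan V'" for w
    using that
  proof (induction rule: lspan.induct)
    case (base v')
    then obtain v where vV: "v \<in> V" and v': "v' = (\<lambda>i. v i - (v n / v0 n) * v0 i)"
      unfolding V'_def by auto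
    have "(\<lambda>i. 1 * v i + (- (v n / v0 n)) * v0 i) \<in> lspan V"
      by (intro lspan.lin lspan.base vV v0(1))
    then show ?case using v' v0(2) by simp
  next
    case (lin u w a b)
    then show ?case by (auto intro: lspan.lin)
  qed
  define w where "w = (\<lambda>i. 1 * w' i + (u n / v0 n) * v0 i)"
  have "w \<in> lspan V" unfolding w_def using key[OF w'(1)] v0(1)
    by (intro lspan.lin) (auto intro: lspan.base)
  moreover have "\<forall>i<Suc n. u i = w i"
  proof (intro allI impI)
    fix i assume "i < Suc n"
    then consider "i < n" | "i = n" by linarith
    then show "u i = w i"
    proof cases
      case 1
      then show ?thesis using w'(2) unfolding w_def u'_def by (metis add.commute diff_add_cancel mult_1)
    next
      case 2
      then show ?thesis using key[OF w'(1)] v0(2) unfolding w_def by simp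
    qed
  qed
  ultimately show ?case by blast
qed




definition phi :: "int pmf \<Rightarrow> real \<Rightarrow> real" where
  "phi q x = measure_pmf.expectation q (\<lambda>z. cos (of_int z * x))"

lemma integrable_bounded_pmf:
  fixes f :: "'a \<Rightarrow> real"
  assumes "\<And>z. \<bar>f z\<bar> \<le> B"
  shows "integrable (measure_pmf p) f"
  by (rule measure_pmf.integrable_const_bound[where B=B]) (use assms in auto)

lemma sin_exp_zero:
  assumes sym: "\<forall>z. pmf q z = pmf q (- z)"
  shows "measure_pmf.expectation q (\<lambda>z. sin (of_int z * x)) = (0::real)"
proof -
  let ?E = "measure_pmf.expectation q (\<lambda>z. sin (of_int z * x::real))"
  have "?E = measure_pmf.expectation (map_pmf uminus q) (\<lambda>z. sin (of_int z * x))"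
    using q_sym_map[OF sym] by simp
  also have "\<dots> = measure_pmf.expectation q (\<lambda>z. - sin (of_int z * x))"
    by simp
  also have "\<dots> = - ?E" by simp
  finally show ?thesis by simp
qed

lemma phi_pow:
  assumes sym: "\<forall>z. pmf q z = pmf q (- z)"
  shows "measure_pmf.expectation (conv_pow q n) (\<lambda>z. cos (of_int z * x)) = phi q (x::real) ^ n"
proof (induction n)
  case 0
  then show ?case by simp
next
  case (Suc n)
  have "measure_pmf.expectation (conv_pow q (Suc n)) (\<lambda>z. cos (of_int z * x))
     = measure_pmf.expectation (conv_pow q n)
         (\<lambda>a. measure_pmf.expectation (map_pmf (\<lambda>y. a + y) q) (\<lambda>z. cos (of_int z * x)))"
    by (simp only: conv_pow.simps) (rule exp_bind_bounded[where B=1], simp)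
  also have "\<dots> = measure_pmf.expectation (conv_pow q n) (\<lambda>a. cos (of_int a * x) * phi q x)"
  proof (rule Bochner_Integration.integral_cong[OF refl])
    fix a
    have "measure_pmf.expectation (map_pmf (\<lambda>y. a + y) q) (\<lambda>z. cos (of_int z * x))
        = measure_pmf.expectation q (\<lambda>y. cos (of_int a * x) * cos (of_int y * x) - sin (of_int a * x) * sin (of_int y * x))"
      by (simp add: cos_add distrib_right)
    also have "\<dots> = cos (of_int a * x) * phi q x - sin (of_int a * x) * measure_pmf.expectation q (\<lambda>y. sin (of_int y * x))"
      unfolding phi_def
      by (subst Bochner_Integration.integral_diff)
         (auto intro!: integrable_bounded_pmf[where B=1] simp: abs_mult mult_le_one)
    also have "\<dots> = cos (of_int a * x) * phi q x" using sin_exp_zero[OF sym] by simp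
    finally show "measure_pmf.expectation (map_pmf (\<lambda>y. a + y) q) (\<lambda>z. cos (of_int z * x)) = cos (of_int a * x) * phi q x" .
  qed
  also have "\<dots> = phi q x ^ Suc n" using Suc by simp
  finally show ?case .
qed

lemma int_cos:
  fixes m :: int
  shows "integral\<^sup>L lborel (\<lambda>x. indicator {0..pi} x * cos (of_int m * x)) = (if m = 0 then pi else 0)"
proof (cases "m = 0")
  case True
  then show ?thesis by simp
next
  case False
  have "integral\<^sup>L lborel (\<lambda>x. indicator {0..pi} x *\<^sub>R cos (of_int m * x))
      = sin (of_int m * pi) / of_int m - sin (of_int m * 0) / of_int m"
    apply (rule integral_FTC_atLeastAtMost)
    using False apply (auto intro!: derivative_eq_intros continuous_intros
        simp: has_real_derivative_iff_has_vector_derivative[symmetric])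
    done
  moreover have "sin (of_int m * pi) = 0" by (simp add: sin_times_pi_eq_0 mult.commute)
  ultimately show ?thesis using False by simp
qed

lemma int_coscos:
  fixes z d :: int
  shows "integral\<^sup>L lborel (\<lambda>x. indicator {0..pi} x * (cos (of_int z * x) * cos (of_int d * x)))
     = pi / 2 * (indicator {d} z + indicator {-d} z)"
proof -
  have "set_integrable lborel {0..pi} (\<lambda>x. cos (of_int (z - d) * x))"
    by (rule borel_integrable_atLeastAtMost') (intro continuous_intros)
  hence i1: "integrable lborel (\<lambda>x. indicator {0..pi} x * cos (of_int (z - d) * x))"
    by (simp add: set_integrable_def)
  have "set_integrable lborel {0..pi} (\<lambda>x. cos (of_int (z + d) * x))"
    by (rule borel_integrable_atLeastAtMost') (intro continuous_intros)
  hence i2: "integrable lborel (\<lambda>x. indicator {0..pi} x * cos (of_int (z + d) * x))"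
    by (simp add: set_integrable_def)
  have "(\<lambda>x. indicator {0..pi} x * (cos (of_int z * x) * cos (of_int d * x)))
      = (\<lambda>x. (indicator {0..pi} x * cos (of_int (z - d) * x)) / 2 + (indicator {0..pi} x * cos (of_int (z + d) * x)) / 2)"
    apply (rule ext) apply (simp add: cos_times_cos algebra_simps add_divide_distrib)
    by (metis cos_minus minus_diff_eq)
  hence "integral\<^sup>L lborel (\<lambda>x. indicator {0..pi} x * (cos (of_int z * x) * cos (of_int d * x)))
      = integral\<^sup>L lborel (\<lambda>x. indicator {0..pi} x * cos (of_int (z - d) * x)) / 2
        + integral\<^sup>L lborel (\<lambda>x. indicator {0..pi} x * cos (of_int (z + d) * x)) / 2"
    using i1 i2 by simp
  also have "\<dots> = pi / 2 * (indicator {d} z + indicator {-d} z)"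
    unfolding int_cos by (auto simp: indicator_def)
  finally show ?thesis .
qed

lemma fourier_coef:
  assumes sym: "\<forall>z. pmf q z = pmf q (- z)"
  shows "integral\<^sup>L lborel (\<lambda>x. indicator {0..pi} x * (phi q x ^ n * cos (of_int d * x)))
     = pi * pmf (conv_pow q n) d"
proof -
  let ?p = "conv_pow q n"
  define f where "f = (\<lambda>z x. indicator {0..pi} x * (cos (of_int z * x) * cos (of_int d * x)) :: real)"
  interpret P: pair_sigma_finite "measure_pmf ?p" lborel
    by (intro pair_sigma_finite.intro measure_pmf.sigma_finite_measure_axioms lborel.sigma_finite_measure_axioms)
  have meas: "case_prod f \<in> borel_measurable (measure_pmf ?p \<Otimes>\<^sub>M lborel)"
  proof -
    have "case_prod f \<in> borel_measurable (count_space UNIV \<Otimes>\<^sub>M lborel)"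
      by (rule measurable_pair_measure_countable1) (auto simp: f_def)
    moreover have se: "sets (measure_pmf ?p \<Otimes>\<^sub>M lborel) = sets (count_space UNIV \<Otimes>\<^sub>M lborel)"
      by (intro sets_pair_measure_cong sets_measure_pmf_count_space refl)
    ultimately show ?thesis using measurable_cong_sets[OF se refl] by simp
  qed
  have fi: "integrable lborel (f z)" for z
  proof -
    have "set_integrable lborel {0..pi} (\<lambda>x. cos (of_int z * x) * cos (of_int d * x))"
      by (rule borel_integrable_atLeastAtMost') (intro continuous_intros)
    thus ?thesis by (simp add: set_integrable_def f_def)
  qed
  have fb: "\<bar>integral\<^sup>L lborel (\<lambda>x. norm (f z x))\<bar> \<le> pi" for z
  proof -
    have "integral\<^sup>L lborel (\<lambda>x. norm (f z x)) \<le> integral\<^sup>L lborel (\<lambda>x. indicator {0..pi} x :: real)"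
    proof (rule integral_mono)
      show "integrable lborel (\<lambda>x. norm (f z x))" using integrable_norm[OF fi[of z]] .
      have "set_integrable lborel {0..pi} (\<lambda>x. 1::real)" by (rule borel_integrable_atLeastAtMost') simp
      thus "integrable lborel (\<lambda>x. indicator {0..pi} x :: real)" by (simp add: set_integrable_def)
      show "norm (f z x) \<le> indicator {0..pi} x" for x
        by (auto simp: f_def indicator_def abs_mult mult_le_one)
    qed
    moreover have "integral\<^sup>L lborel (\<lambda>x. norm (f z x)) \<ge> 0" by simp
    ultimately show ?thesis by simp
  qed
  have int: "integrable (measure_pmf ?p \<Otimes>\<^sub>M lborel) (case_prod f)"
    apply (rule P.Fubini_integrable[OF meas])
    using fb by (auto intro!: integrable_bounded_pmf[where B=pi] fi)
  have "integral\<^sup>L lborel (\<lambda>x. indicator {0..pi} x * (phi q x ^ n * cos (of_int d * x)))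
      = integral\<^sup>L lborel (\<lambda>x. measure_pmf.expectation ?p (\<lambda>z. f z x))"
    unfolding f_def phi_pow[OF sym, symmetric]
    by (simp add: mult.assoc)
  also have "\<dots> = measure_pmf.expectation ?p (\<lambda>z. integral\<^sup>L lborel (f z))"
    using P.Fubini_integral[OF int] by simp
  also have "\<dots> = measure_pmf.expectation ?p (\<lambda>z. pi / 2 * (indicator {d} z + indicator {-d} z))"
    unfolding f_def int_coscos ..
  also have "\<dots> = pi / 2 * (pmf ?p d + pmf ?p (-d))"
    apply (subst integral_mult_right_zero)
    apply (subst Bochner_Integration.integral_add)
    by (auto simp: measure_pmf_single intro!: integrable_bounded_pmf[where B=1])
  also have "\<dots> = pi * pmf ?p d" using conv_sym[OF sym, of n d] by simp
  finally show ?thesis .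
qed




lemma int_pow_Icc:
  assumes "0 \<le> r"
  shows "integral\<^sup>L lborel (\<lambda>x. indicator {0..r} x * x ^ k) = r ^ (k + 1) / real (k + 1)"
proof -
  have "integral\<^sup>L lborel (\<lambda>x. indicator {0..r} x *\<^sub>R x ^ k)
      = r ^ (k + 1) / real (k + 1) - 0 ^ (k + 1) / real (k + 1)"
    apply (rule integral_FTC_atLeastAtMost[where F="\<lambda>x. x ^ (k + 1) / real (k + 1)"])
    using assms apply (auto intro!: derivative_eq_intros continuous_intros
        simp: has_real_derivative_iff_has_vector_derivative[symmetric])
    apply (cases k) apply (auto simp: field_simps)
    done
  thus ?thesis by simp
qed

lemma pow_decay:
  fixes \<rho> :: real
  assumes "0 \<le> \<rho>" "\<rho> < 1"
  shows "(\<lambda>s. real s ^ k * \<rho> ^ s) \<longlonglongrightarrow> 0"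
proof (cases "k = 0")
  case True
  then show ?thesis using assms by (simp add: LIMSEQ_power_zero)
next
  case False
  define \<rho>1 where "\<rho>1 = root k \<rho>"
  have r1: "0 \<le> \<rho>1" "\<rho>1 < 1" using assms False unfolding \<rho>1_def
    by (auto simp: real_root_lt_1_iff)
  have pk: "\<rho>1 ^ k = \<rho>" using assms False unfolding \<rho>1_def by (simp add: real_root_pow_pos2)
  have "(\<lambda>s. (of_nat s * \<rho>1 ^ s) ^ k) \<longlonglongrightarrow> 0 ^ k"
    by (rule tendsto_power, rule powser_times_n_limit_0) (use r1 in auto)
  moreover have "(of_nat s * \<rho>1 ^ s) ^ k = real s ^ k * \<rho> ^ s" for s
    by (simp add: power_mult_distrib pk[symmetric] power_mult[symmetric] mult.commute)
  moreover have "0 ^ k = (0::real)" using False by simp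
  ultimately show ?thesis by simp
qed

lemma asym:
  fixes g \<psi> :: "real \<Rightarrow> real" and \<kappa> B C1 :: real and m :: nat
  assumes cg: "continuous_on {0..pi} g" and cp: "continuous_on {0..pi} \<psi>"
  and zero: "\<And>t. t \<ge> 1 \<Longrightarrow> integral\<^sup>L lborel (\<lambda>x. indicator {0..pi} x * (g x * \<psi> x ^ t)) = 0"
  and tay: "\<And>x. 0 \<le> x \<Longrightarrow> x \<le> pi \<Longrightarrow> \<bar>g x - \<kappa> * x ^ (2*m)\<bar> \<le> B * x ^ (2*m+2)"
  and B: "B \<ge> 0"
  and low: "\<And>x. 0 \<le> x \<Longrightarrow> x \<le> pi \<Longrightarrow> 1 - C1 * x\<^sup>2 \<le> \<psi> x" and C1: "C1 > 0"
  and far: "\<And>\<eta>. 0 < \<eta> \<Longrightarrow> \<exists>\<rho><1. \<forall>x. \<eta> \<le> x \<longrightarrow> x \<le> pi \<longrightarrow> \<bar>\<psi> x\<bar> \<le> \<rho>"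
  shows "\<kappa> = 0"
proof (rule ccontr)
  assume k: "\<kappa> \<noteq> 0"
  define s0 :: real where "s0 = (if \<kappa> > 0 then 1 else -1)"
  have s0k: "s0 * \<kappa> = \<bar>\<kappa>\<bar>" and s0a: "\<bar>s0\<bar> = 1" unfolding s0_def by auto
  define D where "D = C1 + 2 * B / \<bar>\<kappa>\<bar> + 1"
  have D1: "D \<ge> 1" unfolding D_def using C1 B k by auto
  define \<eta> where "\<eta> = min pi (1 / sqrt D)"
  have eta_pos: "\<eta> > 0" unfolding \<eta>_def using D1 by auto
  have eta_pi: "\<eta> \<le> pi" unfolding \<eta>_def by auto
  have eta2: "\<eta>\<^sup>2 \<le> 1 / D"
  proof -
    have "\<eta> \<le> 1 / sqrt D" unfolding \<eta>_def by auto
    hence "\<eta>\<^sup>2 \<le> (1 / sqrt D)\<^sup>2" using eta_pos by (intro power_mono) auto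
    thus ?thesis using D1 by (simp add: power_divide)
  qed
  have C1eta: "C1 * \<eta>\<^sup>2 \<le> 1"
  proof -
    have "C1 * \<eta>\<^sup>2 \<le> C1 * (1 / D)" using eta2 C1 by (intro mult_left_mono) auto
    also have "\<dots> \<le> 1"
    proof -
      have "C1 \<le> D" unfolding D_def using B k by simp
      thus ?thesis using D1 by simp
    qed
    finally show ?thesis .
  qed
  have Beta: "B * \<eta>\<^sup>2 \<le> \<bar>\<kappa>\<bar> / 2"
  proof -
    have "B * \<eta>\<^sup>2 \<le> B * (1 / D)" using eta2 B by (intro mult_left_mono) auto
    also have "\<dots> \<le> \<bar>\<kappa>\<bar> / 2"
    proof -
      have "\<bar>\<kappa>\<bar> * D = \<bar>\<kappa>\<bar> * C1 + 2 * B + \<bar>\<kappa>\<bar>" unfolding D_def using k by (simp add: field_simps)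
      hence "2 * B \<le> \<bar>\<kappa>\<bar> * D" using C1 k by (smt (verit) mult_nonneg_nonneg abs_ge_zero)
      thus ?thesis using D1 by (simp add: field_simps)
    qed
    finally show ?thesis .
  qed
  obtain \<rho>0 where r0: "\<rho>0 < 1" "\<And>x. \<eta> \<le> x \<Longrightarrow> x \<le> pi \<Longrightarrow> \<bar>\<psi> x\<bar> \<le> \<rho>0"
    using far[OF eta_pos] by blast
  define \<rho> where "\<rho> = max \<rho>0 0"
  have rho: "0 \<le> \<rho>" "\<rho> < 1" "\<And>x. \<eta> \<le> x \<Longrightarrow> x \<le> pi \<Longrightarrow> \<bar>\<psi> x\<bar> \<le> \<rho>"
    unfolding \<rho>_def using r0 by force+
  define G where "G = \<bar>\<kappa>\<bar> * pi ^ (2*m) + B * pi ^ (2*m+2)"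
  have G0: "G \<ge> 0" unfolding G_def using B by auto
  have gG: "\<bar>g x\<bar> \<le> G" if "0 \<le> x" "x \<le> pi" for x
  proof -
    have "\<bar>g x\<bar> \<le> \<bar>\<kappa> * x ^ (2*m)\<bar> + B * x ^ (2*m+2)"
      using tay[OF that] by linarith
    also have "\<dots> \<le> G"
    proof -
      have a1: "\<bar>\<kappa> * x ^ (2*m)\<bar> \<le> \<bar>\<kappa>\<bar> * pi ^ (2*m)"
      proof -
        have "x ^ (2*m) \<le> pi ^ (2*m)" using that by (intro power_mono) auto
        thus ?thesis using that by (simp add: abs_mult mult_left_mono)
      qed
      have a2: "B * x ^ (2*m+2) \<le> B * pi ^ (2*m+2)" using that B by (intro mult_left_mono power_mono) auto
      show ?thesis unfolding G_def using a1 a2 by linarith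
    qed
    finally show ?thesis .
  qed
  have core: "\<bar>\<kappa>\<bar> / 4 * (r ^ (2*m+1) / real (2*m+1)) \<le> pi * G * \<rho> ^ t"
    if t1: "t \<ge> 1" and r0': "0 < r" and reta: "r \<le> \<eta>" and rt: "C1 * r\<^sup>2 * real t \<le> 1/2" for t r
  proof -
    have rpi: "r \<le> pi" using reta eta_pi by linarith
    define L where "L = (\<lambda>x. indicator {0..pi} x * (s0 * (g x * \<psi> x ^ t)))"
    define R where "R = (\<lambda>x. \<bar>\<kappa>\<bar> / 4 * (indicator {0..r} x * x ^ (2*m)) - G * \<rho> ^ t * indicator {0..pi} x)"
    have pw: "R x \<le> L x" for x
    proof (cases "0 \<le> x \<and> x \<le> pi")
      case False
      then show ?thesis unfolding L_def R_def using rpi by (auto simp: indicator_def)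
    next
      case True
      hence x0: "0 \<le> x" and xpi: "x \<le> pi" by auto
      show ?thesis
      proof (cases "x \<le> \<eta>")
        case True
        have x2: "x\<^sup>2 \<le> \<eta>\<^sup>2" using True x0 by (intro power_mono) auto
        have "s0 * g x \<ge> \<bar>\<kappa>\<bar> * x ^ (2*m) - B * x ^ (2*m+2)"
        proof -
          have "s0 * g x = \<bar>\<kappa>\<bar> * x ^ (2*m) + s0 * (g x - \<kappa> * x ^ (2*m))"
            using s0k by (simp add: algebra_simps)
          moreover have "\<bar>s0 * (g x - \<kappa> * x ^ (2*m))\<bar> \<le> B * x ^ (2*m+2)"
            using tay[OF x0 xpi] s0a by (simp add: abs_mult)
          ultimately show ?thesis by linarith
        qed
        moreover have "B * x ^ (2*m+2) \<le> \<bar>\<kappa>\<bar> / 2 * x ^ (2*m)"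
        proof -
          have "B * x ^ (2*m+2) = (B * x\<^sup>2) * x ^ (2*m)" by (simp add: power_add power2_eq_square)
          also have "\<dots> \<le> (\<bar>\<kappa>\<bar> / 2) * x ^ (2*m)"
          proof (rule mult_right_mono)
            have "B * x\<^sup>2 \<le> B * \<eta>\<^sup>2" by (rule mult_left_mono[OF x2 B])
            thus "B * x\<^sup>2 \<le> \<bar>\<kappa>\<bar> / 2" using Beta by linarith
          qed (use x0 in simp)
          finally show ?thesis .
        qed
        ultimately have sg: "s0 * g x \<ge> \<bar>\<kappa>\<bar> / 2 * x ^ (2*m)" by linarith
        have psi0: "\<psi> x \<ge> 1 - C1 * x\<^sup>2" using low[OF x0 xpi] .
        have "C1 * x\<^sup>2 \<le> 1" using C1eta x2 C1 by (meson mult_left_mono less_imp_le order.trans)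
        hence psinn: "\<psi> x \<ge> 0" using psi0 by linarith
        have sgn0: "s0 * g x \<ge> 0" using sg x0 k by (smt (verit) zero_le_power divide_nonneg_pos abs_ge_zero mult_nonneg_nonneg)
        have Lx: "L x = (s0 * g x) * \<psi> x ^ t" unfolding L_def using x0 xpi by (simp add: indicator_def algebra_simps)
        show ?thesis
        proof (cases "x \<le> r")
          case True
          have xr2: "x\<^sup>2 \<le> r\<^sup>2" using True x0 by (intro power_mono) auto
          have "1 / 2 \<le> 1 + real t * (- (C1 * x\<^sup>2))"
          proof -
            have "C1 * x\<^sup>2 * real t \<le> C1 * r\<^sup>2 * real t"
              using xr2 C1 by (intro mult_right_mono mult_left_mono) auto
            thus ?thesis using rt by (simp add: algebra_simps)
          qed
          also have "\<dots> \<le> (1 + (- (C1 * x\<^sup>2))) ^ t"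
            by (rule Bernoulli_inequality) (use \<open>C1 * x\<^sup>2 \<le> 1\<close> in simp)
          also have "\<dots> \<le> \<psi> x ^ t"
            by (rule power_mono) (use psi0 \<open>C1 * x\<^sup>2 \<le> 1\<close> in auto)
          finally have pt: "\<psi> x ^ t \<ge> 1/2" .
          have "\<bar>\<kappa>\<bar> / 4 * x ^ (2*m) = (\<bar>\<kappa>\<bar> / 2 * x ^ (2*m)) * (1/2)" by simp
          also have "\<dots> \<le> (s0 * g x) * \<psi> x ^ t"
            by (rule mult_mono) (use sg pt sgn0 in auto)
          finally have "\<bar>\<kappa>\<bar> / 4 * x ^ (2*m) \<le> L x" using Lx by simp
          moreover have "R x \<le> \<bar>\<kappa>\<bar> / 4 * x ^ (2*m)"
            unfolding R_def using True x0 xpi G0 rho(1) by (auto simp: indicator_def)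
          ultimately show ?thesis by linarith
        next
          case False
          have "L x \<ge> 0" using Lx sgn0 psinn by simp
          moreover have "R x \<le> 0"
            unfolding R_def using False x0 xpi G0 rho(1) by (auto simp: indicator_def)
          ultimately show ?thesis by linarith
        qed
      next
        case False
        have "\<bar>\<psi> x\<bar> \<le> \<rho>" using rho(3)[of x] False xpi by auto
        hence "\<bar>\<psi> x\<bar> ^ t \<le> \<rho> ^ t" by (intro power_mono) auto
        hence "\<bar>s0 * (g x * \<psi> x ^ t)\<bar> \<le> G * \<rho> ^ t"
          using gG[OF x0 xpi] s0a by (simp add: abs_mult power_abs mult_mono)
        hence "L x \<ge> - (G * \<rho> ^ t)" unfolding L_def using x0 xpi by (simp add: indicator_def)
        moreover have "R x = - (G * \<rho> ^ t)"
          unfolding R_def using False x0 xpi reta by (auto simp: indicator_def)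
        ultimately show ?thesis by linarith
      qed
    qed
    have intL: "integrable lborel L"
    proof -
      have "set_integrable lborel {0..pi} (\<lambda>x. s0 * (g x * \<psi> x ^ t))"
        by (rule borel_integrable_atLeastAtMost') (intro continuous_intros cg cp)
      thus ?thesis unfolding L_def by (simp add: set_integrable_def)
    qed
    have i1: "integrable lborel (\<lambda>x. indicator {0..r} x * x ^ (2*m))"
    proof -
      have "set_integrable lborel {0..r} (\<lambda>x. x ^ (2*m))"
        by (rule borel_integrable_atLeastAtMost') (intro continuous_intros)
      thus ?thesis by (simp add: set_integrable_def)
    qed
    have i2: "integrable lborel (\<lambda>x. indicator {0..pi} x :: real)"
    proof -
      have "set_integrable lborel {0..pi} (\<lambda>x. 1::real)" by (rule borel_integrable_atLeastAtMost') simp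
      thus ?thesis by (simp add: set_integrable_def)
    qed
    have intR: "integrable lborel R" unfolding R_def using i1 i2 by simp
    have "integral\<^sup>L lborel R \<le> integral\<^sup>L lborel L"
      by (rule integral_mono[OF intR intL]) (use pw in auto)
    also have "integral\<^sup>L lborel L = s0 * integral\<^sup>L lborel (\<lambda>x. indicator {0..pi} x * (g x * \<psi> x ^ t))"
      unfolding L_def by (simp add: algebra_simps)
    also have "\<dots> = 0" using zero[OF t1] by simp
    finally have "integral\<^sup>L lborel R \<le> 0" .
    moreover have "integral\<^sup>L lborel R = \<bar>\<kappa>\<bar> / 4 * (r ^ (2*m+1) / real (2*m+1)) - G * \<rho> ^ t * pi"
      unfolding R_def using i1 i2 int_pow_Icc[of r "2*m"] r0' by simp
    ultimately show ?thesis by (simp add: algebra_simps)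
  qed
  define K where "K = sqrt (2 * C1)"
  have K0: "K > 0" unfolding K_def using C1 by auto
  have KK: "K\<^sup>2 = 2 * C1" unfolding K_def using C1 by simp
  define c where "c = \<bar>\<kappa>\<bar> / 4 / real (2*m+1) * (1 / K) ^ (2*m+1)"
  have c0: "c > 0" unfolding c_def using k K0 by auto
  have pG: "pi * G + 1 > 0" using G0 pi_gt_zero by (smt (verit) mult_nonneg_nonneg)
  have "eventually (\<lambda>s. real s ^ (2*m+1) * \<rho> ^ s < c / (pi * G + 1)) sequentially"
    by (rule order_tendstoD(2)[OF pow_decay[OF rho(1) rho(2)]]) (use c0 pG in simp)
  then obtain N1 where N1: "\<And>s. s \<ge> N1 \<Longrightarrow> real s ^ (2*m+1) * \<rho> ^ s < c / (pi * G + 1)"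
    unfolding eventually_sequentially by blast
  define s where "s = max N1 (nat \<lceil>1 / (K * \<eta>)\<rceil> + 1)"
  have s1: "s \<ge> 1" unfolding s_def by auto
  have sK: "real s \<ge> 1 / (K * \<eta>)" unfolding s_def by linarith
  have spos: "real s > 0" using s1 by simp
  define r where "r = 1 / (K * real s)"
  have rpos: "r > 0" unfolding r_def using K0 spos by simp
  have reta: "r \<le> \<eta>"
  proof -
    have "1 \<le> K * \<eta> * real s" using sK K0 eta_pos by (simp add: field_simps)
    thus ?thesis unfolding r_def using K0 spos eta_pos by (simp add: field_simps)
  qed
  have rt: "C1 * r\<^sup>2 * real (s\<^sup>2) \<le> 1/2"
  proof -
    have "C1 * r\<^sup>2 * real (s\<^sup>2) = C1 / K\<^sup>2" unfolding r_def using K0 spos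
      by (simp add: field_simps power2_eq_square)
    also have "\<dots> = 1/2" using KK C1 by simp
    finally show ?thesis by simp
  qed
  have t1: "s\<^sup>2 \<ge> 1" using s1 by (simp add: one_le_power)
  have "\<bar>\<kappa>\<bar> / 4 * (r ^ (2*m+1) / real (2*m+1)) \<le> pi * G * \<rho> ^ (s\<^sup>2)"
    by (rule core[OF t1 rpos reta rt])
  also have "\<dots> \<le> pi * G * \<rho> ^ s"
  proof -
    have "s \<le> s\<^sup>2" by (simp add: power2_eq_square)
    hence "\<rho> ^ (s\<^sup>2) \<le> \<rho> ^ s" using rho(1,2) by (intro power_decreasing) auto
    thus ?thesis using G0 by (intro mult_left_mono) auto
  qed
  finally have A: "\<bar>\<kappa>\<bar> / 4 * (r ^ (2*m+1) / real (2*m+1)) \<le> pi * G * \<rho> ^ s" .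
  have E: "\<bar>\<kappa>\<bar> / 4 * (r ^ (2*m+1) / real (2*m+1)) = c / real s ^ (2*m+1)"
    unfolding c_def r_def by (simp add: power_divide power_mult_distrib field_simps)
  have "c / real s ^ (2*m+1) \<le> pi * G * \<rho> ^ s" using A E by simp
  hence "c \<le> pi * G * \<rho> ^ s * real s ^ (2*m+1)" using spos by (simp add: pos_divide_le_eq)
  also have "\<dots> = pi * G * (real s ^ (2*m+1) * \<rho> ^ s)" by (simp add: mult_ac)
  also have "\<dots> \<le> pi * G * (c / (pi * G + 1))"
    using N1[of s] G0 unfolding s_def by (intro mult_left_mono) auto
  also have "\<dots> < c" using c0 G0 pG by (simp add: field_simps)
  finally show False by simp
qed




lemma exp_le_const:
  fixes f :: "'a \<Rightarrow> real"
  assumes "\<And>z. f z \<le> B" "\<And>z. \<bar>f z\<bar> \<le> C"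
  shows "measure_pmf.expectation p f \<le> B"
proof -
  have "measure_pmf.expectation p f \<le> measure_pmf.expectation p (\<lambda>_. B)"
    by (rule integral_mono) (auto intro: integrable_bounded_pmf assms)
  thus ?thesis by simp
qed

lemma exp_ge_const:
  fixes f :: "'a \<Rightarrow> real"
  assumes "\<And>z. B \<le> f z" "\<And>z. \<bar>f z\<bar> \<le> C"
  shows "B \<le> measure_pmf.expectation p f"
proof -
  have "measure_pmf.expectation p (\<lambda>_. B) \<le> measure_pmf.expectation p f"
    by (rule integral_mono) (auto intro: integrable_bounded_pmf assms)
  thus ?thesis by simp
qed

lemma abs_int_bound:
  fixes f g :: "'a \<Rightarrow> real"
  assumes "integrable M f" "integrable M g" "\<And>x. \<bar>f x\<bar> \<le> g x"
  shows "\<bar>integral\<^sup>L M f\<bar> \<le> integral\<^sup>L M g"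
proof -
  have "\<bar>integral\<^sup>L M f\<bar> \<le> integral\<^sup>L M (\<lambda>x. \<bar>f x\<bar>)" using integral_norm_bound[of M f] by simp
  also have "\<dots> \<le> integral\<^sup>L M g" by (rule integral_mono) (use assms in auto)
  finally show ?thesis .
qed

lemma phi_le1: "phi q x \<le> 1"
  unfolding phi_def by (rule exp_le_const[where C=1]) auto

lemma phi_ge: "-1 \<le> phi q x"
  unfolding phi_def by (rule exp_ge_const[where C=1]) auto

lemma cos_lower: "1 - y\<^sup>2 / 2 \<le> cos (y::real)"
proof -
  have "cos y = 1 - 2 * sin (y/2) ^ 2" using cos_double_sin[of "y/2"] by simp
  moreover have "sin (y/2) ^ 2 \<le> (y/2)^2"
  proof -
    have "\<bar>sin (y/2)\<bar> ^ 2 \<le> \<bar>y/2\<bar> ^ 2" by (rule power_mono[OF abs_sin_x_le_abs_x]) simp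
    thus ?thesis by (simp add: power_divide)
  qed
  ultimately show ?thesis by (simp add: power_divide)
qed

lemma cos_lip: "\<bar>cos a - cos b\<bar> \<le> \<bar>a - (b::real)\<bar>"
proof -
  have "\<bar>cos a - cos b\<bar> = 2 * \<bar>sin ((a + b) / 2)\<bar> * \<bar>sin ((b - a) / 2)\<bar>"
    by (simp add: cos_diff_cos abs_mult)
  also have "\<dots> \<le> 2 * 1 * \<bar>(b - a) / 2\<bar>"
    by (intro mult_mono abs_sin_x_le_abs_x) auto
  finally show ?thesis by simp
qed

lemma phi_lower:
  assumes "integrable (measure_pmf q) (\<lambda>z. (real_of_int z)\<^sup>2)"
  shows "1 - measure_pmf.expectation q (\<lambda>z. (real_of_int z)\<^sup>2) * x\<^sup>2 / 2 \<le> phi q x"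
proof -
  have "measure_pmf.expectation q (\<lambda>z. 1 - (real_of_int z)\<^sup>2 * (x\<^sup>2 / 2)) \<le> phi q x"
    unfolding phi_def
  proof (rule integral_mono)
    show "integrable (measure_pmf q) (\<lambda>z. 1 - (real_of_int z)\<^sup>2 * (x\<^sup>2 / 2))"
      using assms by auto
    show "integrable (measure_pmf q) (\<lambda>z. cos (real_of_int z * x))"
      by (rule integrable_bounded_pmf[where B=1]) auto
    show "1 - (real_of_int z)\<^sup>2 * (x\<^sup>2 / 2) \<le> cos (real_of_int z * x)" for z
      using cos_lower[of "real_of_int z * x"] by (simp add: power_mult_distrib)
  qed
  moreover have "measure_pmf.expectation q (\<lambda>z. 1 - (real_of_int z)\<^sup>2 * (x\<^sup>2 / 2))
      = 1 - measure_pmf.expectation q (\<lambda>z. (real_of_int z)\<^sup>2) * (x\<^sup>2 / 2)"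
    using assms by (simp add: Bochner_Integration.integral_diff)
  ultimately show ?thesis by simp
qed

lemma phi_lip:
  assumes "integrable (measure_pmf q) (\<lambda>z. real_of_int z)"
  shows "\<bar>phi q x - phi q y\<bar> \<le> measure_pmf.expectation q (\<lambda>z. \<bar>real_of_int z\<bar>) * \<bar>x - y\<bar>"
proof -
  have i: "integrable (measure_pmf q) (\<lambda>z. cos (real_of_int z * w))" for w
    by (rule integrable_bounded_pmf[where B=1]) auto
  have "phi q x - phi q y = measure_pmf.expectation q (\<lambda>z. cos (real_of_int z * x) - cos (real_of_int z * y))"
    unfolding phi_def using i by (simp add: Bochner_Integration.integral_diff)
  also have "\<bar>\<dots>\<bar> \<le> measure_pmf.expectation q (\<lambda>z. \<bar>real_of_int z\<bar> * \<bar>x - y\<bar>)"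
  proof (rule abs_int_bound)
    show "integrable (measure_pmf q) (\<lambda>z. cos (real_of_int z * x) - cos (real_of_int z * y))"
      using i by auto
    show "integrable (measure_pmf q) (\<lambda>z. \<bar>real_of_int z\<bar> * \<bar>x - y\<bar>)"
      using assms by auto
    show "\<bar>cos (real_of_int z * x) - cos (real_of_int z * y)\<bar> \<le> \<bar>real_of_int z\<bar> * \<bar>x - y\<bar>" for z
      using cos_lip[of "real_of_int z * x" "real_of_int z * y"] by (simp add: abs_mult right_diff_distrib[symmetric])
  qed
  also have "\<dots> = measure_pmf.expectation q (\<lambda>z. \<bar>real_of_int z\<bar>) * \<bar>x - y\<bar>" by simp
  finally show ?thesis .
qed

lemma phi_cont:
  assumes "integrable (measure_pmf q) (\<lambda>z. real_of_int z)"
  shows "continuous_on S (phi q)"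
proof (rule lipschitz_on_continuous_on)
  show "(measure_pmf.expectation q (\<lambda>z. \<bar>real_of_int z\<bar>))-lipschitz_on S (phi q)"
    by (rule lipschitz_onI) (auto simp: dist_real_def intro: phi_lip[OF assms] integral_nonneg_AE)
qed

lemma gen_sub:
  assumes "\<And>z. z \<in> A \<Longrightarrow> z \<in> G" "0 \<in> G" "\<And>x y. x \<in> G \<Longrightarrow> y \<in> G \<Longrightarrow> x + y \<in> G"
    "\<And>x. x \<in> G \<Longrightarrow> - x \<in> G"
  shows "x \<in> int_subgroup_gen A \<Longrightarrow> x \<in> G"
  by (induction rule: int_subgroup_gen.induct) (use assms in auto)

lemma phi_lt1:
  assumes gen: "int_subgroup_gen (set_pmf q) = UNIV" and x: "0 < x" "x \<le> pi"
  shows "phi q x < 1"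
proof (rule ccontr)
  assume "\<not> phi q x < 1"
  hence e1: "phi q x = 1" using phi_le1[of q x] by simp
  have "measure_pmf.expectation q (\<lambda>z. 1 - cos (real_of_int z * x)) = 1 - phi q x"
    unfolding phi_def by (simp add: Bochner_Integration.integral_diff integrable_bounded_pmf[where B=1])
  hence "measure_pmf.expectation q (\<lambda>z. 1 - cos (real_of_int z * x)) = 0" using e1 by simp
  hence "AE z in measure_pmf q. 1 - cos (real_of_int z * x) = 0"
    by (subst (asm) integral_nonneg_eq_0_iff_AE)
       (auto intro!: integrable_bounded_pmf[where B=2] simp: abs_le_iff)
  hence cz: "\<And>z. z \<in> set_pmf q \<Longrightarrow> cos (real_of_int z * x) = 1"
    by (simp add: AE_measure_pmf_iff)
  define G where "G = {z::int. \<exists>n::int. real_of_int z * x = real_of_int n * 2 * pi}"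
  have "1 \<in> G"
  proof (rule gen_sub[of "set_pmf q"])
    show "z \<in> G" if "z \<in> set_pmf q" for z using cz[OF that] unfolding G_def cos_one_2pi_int by auto
    show "0 \<in> G" unfolding G_def by (auto intro: exI[of _ 0])
    show "a + b \<in> G" if ha: "a \<in> G" and hb: "b \<in> G" for a b
    proof -
      obtain n1 n2 where "real_of_int a * x = real_of_int n1 * 2 * pi" "real_of_int b * x = real_of_int n2 * 2 * pi"
        using ha hb by (auto simp: G_def)
      thus ?thesis unfolding G_def by (auto intro!: exI[of _ "n1 + n2"] simp: algebra_simps)
    qed
    show "- a \<in> G" if ha: "a \<in> G" for a
    proof -
      obtain n1 where "real_of_int a * x = real_of_int n1 * 2 * pi"
        using ha by (auto simp: G_def)
      thus ?thesis unfolding G_def by (auto intro!: exI[of _ "- n1"] simp: algebra_simps)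
    qed
    show "1 \<in> int_subgroup_gen (set_pmf q)" using gen by simp
  qed
  then obtain n :: int where n: "x = real_of_int n * 2 * pi" unfolding G_def by auto
  show False
  proof (cases "n \<ge> 1")
    case True
    hence "real_of_int n * 2 * pi \<ge> 1 * 2 * pi" by (intro mult_right_mono) auto
    thus False using n x by (simp add: pi_gt_zero)
  next
    case False
    hence "n \<le> 0" by simp
    hence "real_of_int n * 2 * pi \<le> 0" by (simp add: mult_nonpos_nonneg)
    thus False using n x by simp
  qed
qed

definition psi :: "int pmf \<Rightarrow> real \<Rightarrow> real" where
  "psi q x = phi q x * (1 + phi q x) / 2"

lemma psi_far:
  assumes gen: "int_subgroup_gen (set_pmf q) = UNIV"
    and int1: "integrable (measure_pmf q) (\<lambda>z. real_of_int z)"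
    and eta: "0 < \<eta>"
  shows "\<exists>\<rho><1. \<forall>x. \<eta> \<le> x \<longrightarrow> x \<le> pi \<longrightarrow> \<bar>psi q x\<bar> \<le> \<rho>"
proof (cases "\<eta> \<le> pi")
  case False
  then show ?thesis by (intro exI[of _ 0]) auto
next
  case True
  have cont: "continuous_on {\<eta>..pi} (psi q)"
    unfolding psi_def by (intro continuous_intros phi_cont[OF int1]) auto
  obtain x0 where x0: "x0 \<in> {\<eta>..pi}" "\<And>x. x \<in> {\<eta>..pi} \<Longrightarrow> psi q x \<le> psi q x0"
    using continuous_attains_sup[OF compact_Icc _ cont] True by auto
  have "phi q x0 < 1" using phi_lt1[OF gen] x0(1) eta by auto
  moreover have "-1 \<le> phi q x0" by (rule phi_ge)
  ultimately have "(1 - phi q x0) * (2 + phi q x0) > 0" by (intro mult_pos_pos) auto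
  hence "phi q x0 + phi q x0 * phi q x0 < 2" by (simp add: algebra_simps)
  hence p1: "psi q x0 < 1" unfolding psi_def by (simp add: algebra_simps)
  have lowb: "psi q x \<ge> -1/8" for x
  proof -
    have "0 \<le> (phi q x + 1/2)\<^sup>2" by simp
    thus ?thesis unfolding psi_def by (simp add: power2_eq_square algebra_simps)
  qed
  show ?thesis
  proof (intro exI conjI allI impI)
    show "max (psi q x0) (1/8) < 1" using p1 by simp
    fix x assume "\<eta> \<le> x" "x \<le> pi"
    hence "psi q x \<le> psi q x0" using x0(2) by auto
    hence a: "psi q x \<le> max (psi q x0) (1/8)" by (rule order.trans[OF _ max.cobounded1])
    have "- psi q x \<le> 1/8" using lowb[of x] by linarith
    hence b: "- psi q x \<le> max (psi q x0) (1/8)" by (rule order.trans[OF _ max.cobounded2])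
    show "\<bar>psi q x\<bar> \<le> max (psi q x0) (1/8)" using a b by (simp only: abs_le_iff)
  qed
qed




lemma cos_taylor:
  "\<bar>cos y - (\<Sum>k<n. cos_coeff k * y ^ k)\<bar> \<le> \<bar>y\<bar> ^ n / fact n"
proof -
  obtain t where t: "cos y = (\<Sum>k<n. cos_coeff k * y ^ k) + (cos (t + 1/2 * real n * pi) / fact n) * y ^ n"
    using Maclaurin_cos_expansion[of y n] by blast
  have "\<bar>cos (t + 1/2 * real n * pi) / fact n * y ^ n\<bar> = \<bar>cos (t + 1/2 * real n * pi)\<bar> * \<bar>y\<bar> ^ n / fact n"
    by (simp add: abs_mult power_abs)
  also have "\<dots> \<le> 1 * \<bar>y\<bar> ^ n / fact n"
    by (intro divide_right_mono mult_right_mono) auto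
  finally have "\<bar>cos (t + 1/2 * real n * pi) / fact n * y ^ n\<bar> \<le> 1 / fact n * \<bar>y\<bar> ^ n" by simp
  thus ?thesis using t by simp
qed

lemma coef_sum:
  fixes c :: "nat \<Rightarrow> real"
  assumes "\<forall>j<m. (\<Sum>d<N. c d * real d ^ (2*j)) = 0"
  shows "(\<Sum>k<2*m+2. cos_coeff k * x ^ k * (\<Sum>d<N. c d * real d ^ k))
       = (-1) ^ m / fact (2*m) * (\<Sum>d<N. c d * real d ^ (2*m)) * x ^ (2*m)"
proof -
  have "(\<Sum>k<2*m+2. cos_coeff k * x ^ k * (\<Sum>d<N. c d * real d ^ k))
      = (\<Sum>k<2*m+2. (if k = 2*m then (-1) ^ m / fact (2*m) * (\<Sum>d<N. c d * real d ^ (2*m)) * x ^ (2*m) else 0))"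
  proof (rule sum.cong[OF refl])
    fix k assume k: "k \<in> {..<2*m+2}"
    show "cos_coeff k * x ^ k * (\<Sum>d<N. c d * real d ^ k)
        = (if k = 2*m then (-1) ^ m / fact (2*m) * (\<Sum>d<N. c d * real d ^ (2*m)) * x ^ (2*m) else 0)"
    proof (cases "k = 2*m")
      case True
      then show ?thesis by (simp add: cos_coeff_def)
    next
      case False
      show ?thesis
      proof (cases "even k")
        case True
        then obtain j where j: "k = 2*j" by blast
        with False k have "j < m" by auto
        hence "(\<Sum>d<N. c d * real d ^ k) = 0" using assms j by blast
        then show ?thesis using False by simp
      next
        case False
        then show ?thesis using \<open>k \<noteq> 2*m\<close> by (simp add: cos_coeff_def)
      qed
    qed
  qed
  also have "\<dots> = (-1) ^ m / fact (2*m) * (\<Sum>d<N. c d * real d ^ (2*m)) * x ^ (2*m)"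
    by (subst sum.delta) auto
  finally show ?thesis .
qed

lemma g_taylor:
  fixes c :: "nat \<Rightarrow> real"
  assumes "\<forall>j<m. (\<Sum>d<N. c d * real d ^ (2*j)) = 0" and x: "0 \<le> x"
  shows "\<bar>(\<Sum>d<N. c d * cos (real d * x)) - (-1) ^ m / fact (2*m) * (\<Sum>d<N. c d * real d ^ (2*m)) * x ^ (2*m)\<bar>
     \<le> (\<Sum>d<N. \<bar>c d\<bar> * real d ^ (2*m+2)) / fact (2*m+2) * x ^ (2*m+2)"
proof -
  define P where "P = (\<lambda>d. \<Sum>k<2*m+2. cos_coeff k * (real d * x) ^ k)"
  have "(\<Sum>d<N. c d * P d) = (\<Sum>d<N. \<Sum>k<2*m+2. c d * (cos_coeff k * x ^ k * real d ^ k))"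
    unfolding P_def sum_distrib_left by (intro sum.cong refl) (simp add: power_mult_distrib mult_ac)
  also have "\<dots> = (\<Sum>k<2*m+2. cos_coeff k * x ^ k * (\<Sum>d<N. c d * real d ^ k))"
    by (subst sum.swap) (simp add: sum_distrib_left mult_ac)
  also have "\<dots> = (-1) ^ m / fact (2*m) * (\<Sum>d<N. c d * real d ^ (2*m)) * x ^ (2*m)"
    by (rule coef_sum[OF assms(1)])
  finally have eP: "(\<Sum>d<N. c d * P d) = (-1) ^ m / fact (2*m) * (\<Sum>d<N. c d * real d ^ (2*m)) * x ^ (2*m)" .
  have "\<bar>(\<Sum>d<N. c d * cos (real d * x)) - (\<Sum>d<N. c d * P d)\<bar>
      = \<bar>\<Sum>d<N. c d * (cos (real d * x) - P d)\<bar>"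
    by (simp add: sum_subtractf right_diff_distrib)
  also have "\<dots> \<le> (\<Sum>d<N. \<bar>c d * (cos (real d * x) - P d)\<bar>)" by (rule sum_abs)
  also have "\<dots> \<le> (\<Sum>d<N. \<bar>c d\<bar> * (real d ^ (2*m+2) / fact (2*m+2) * x ^ (2*m+2)))"
  proof (rule sum_mono)
    fix d
    have "\<bar>cos (real d * x) - P d\<bar> \<le> \<bar>real d * x\<bar> ^ (2*m+2) / fact (2*m+2)"
      unfolding P_def by (rule cos_taylor)
    also have "\<dots> = real d ^ (2*m+2) / fact (2*m+2) * x ^ (2*m+2)"
      using x by (simp add: abs_mult power_mult_distrib)
    finally have h: "\<bar>cos (real d * x) - P d\<bar> \<le> real d ^ (2*m+2) / fact (2*m+2) * x ^ (2*m+2)" .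
    show "\<bar>c d * (cos (real d * x) - P d)\<bar> \<le> \<bar>c d\<bar> * (real d ^ (2*m+2) / fact (2*m+2) * x ^ (2*m+2))"
      unfolding abs_mult by (rule mult_left_mono[OF h]) simp
  qed
  also have "\<dots> = (\<Sum>d<N. (\<bar>c d\<bar> * real d ^ (2*m+2)) * (x ^ (2*m+2) / fact (2*m+2)))"
    by (intro sum.cong refl) (simp add: field_simps)
  also have "\<dots> = (\<Sum>d<N. \<bar>c d\<bar> * real d ^ (2*m+2)) / fact (2*m+2) * x ^ (2*m+2)"
    by (simp only: sum_distrib_right[symmetric]) (simp add: field_simps)
  finally show ?thesis using eP by simp
qed

lemma lagrange_sum:
  fixes c :: "nat \<Rightarrow> real"
  assumes mom: "\<forall>j. (\<Sum>d<N. c d * real d ^ (2*j)) = 0" and fin: "finite E"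
  shows "\<forall>j. (\<Sum>d<N. c d * ((real d)\<^sup>2) ^ j * (\<Prod>e\<in>E. (real d)\<^sup>2 - (real e)\<^sup>2)) = 0"
  using fin
proof (induction rule: finite_induct)
  case empty
  then show ?case using mom by (simp add: power_mult[symmetric])
next
  case (insert e E)
  show ?case
  proof
    fix j
    have "(\<Sum>d<N. c d * ((real d)\<^sup>2) ^ j * (\<Prod>e\<in>insert e E. (real d)\<^sup>2 - (real e)\<^sup>2))
       = (\<Sum>d<N. c d * ((real d)\<^sup>2) ^ Suc j * (\<Prod>e\<in>E. (real d)\<^sup>2 - (real e)\<^sup>2))
         - (real e)\<^sup>2 * (\<Sum>d<N. c d * ((real d)\<^sup>2) ^ j * (\<Prod>e\<in>E. (real d)\<^sup>2 - (real e)\<^sup>2))"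
      using insert(1,2) by (simp add: sum_distrib_left sum_subtractf[symmetric] algebra_simps)
    also have "\<dots> = 0" using spec[OF insert(3), of "Suc j"] spec[OF insert(3), of j] by simp
    finally show "(\<Sum>d<N. c d * ((real d)\<^sup>2) ^ j * (\<Prod>e\<in>insert e E. (real d)\<^sup>2 - (real e)\<^sup>2)) = 0" .
  qed
qed

lemma moments_zero:
  fixes c :: "nat \<Rightarrow> real"
  assumes mom: "\<forall>j. (\<Sum>d<N. c d * real d ^ (2*j)) = 0"
  shows "\<forall>d<N. c d = 0"
proof (intro allI impI)
  fix d0 assume d0: "d0 < N"
  define E where "E = {..<N} - {d0}"
  have "(\<Sum>d<N. c d * ((real d)\<^sup>2) ^ 0 * (\<Prod>e\<in>E. (real d)\<^sup>2 - (real e)\<^sup>2)) = 0"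
    using lagrange_sum[OF mom, of E] unfolding E_def by blast
  moreover have "(\<Sum>d<N. c d * ((real d)\<^sup>2) ^ 0 * (\<Prod>e\<in>E. (real d)\<^sup>2 - (real e)\<^sup>2))
     = c d0 * (\<Prod>e\<in>E. (real d0)\<^sup>2 - (real e)\<^sup>2)"
  proof -
    have "(\<Sum>d<N. c d * ((real d)\<^sup>2) ^ 0 * (\<Prod>e\<in>E. (real d)\<^sup>2 - (real e)\<^sup>2))
        = (\<Sum>d<N. if d = d0 then c d0 * (\<Prod>e\<in>E. (real d0)\<^sup>2 - (real e)\<^sup>2) else 0)"
    proof (rule sum.cong[OF refl])
      fix d assume "d \<in> {..<N}"
      show "c d * ((real d)\<^sup>2) ^ 0 * (\<Prod>e\<in>E. (real d)\<^sup>2 - (real e)\<^sup>2)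
          = (if d = d0 then c d0 * (\<Prod>e\<in>E. (real d0)\<^sup>2 - (real e)\<^sup>2) else 0)"
      proof (cases "d = d0")
        case False
        hence "d \<in> E" using \<open>d \<in> {..<N}\<close> unfolding E_def by auto
        hence "(\<Prod>e\<in>E. (real d)\<^sup>2 - (real e)\<^sup>2) = 0"
          by (intro prod_zero) (auto simp: E_def intro!: bexI[of _ d])
        then show ?thesis using False by simp
      qed simp
    qed
    also have "\<dots> = c d0 * (\<Prod>e\<in>E. (real d0)\<^sup>2 - (real e)\<^sup>2)" using d0 by simp
    finally show ?thesis .
  qed
  moreover have "(\<Prod>e\<in>E. (real d0)\<^sup>2 - (real e)\<^sup>2) \<noteq> 0"
  proof -
    have "(real d0)\<^sup>2 - (real e)\<^sup>2 \<noteq> 0" if "e \<in> E" for e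
    proof
      assume "(real d0)\<^sup>2 - (real e)\<^sup>2 = 0"
      hence "real d0 = real e" by (simp add: power2_eq_iff_nonneg)
      thus False using that unfolding E_def by simp
    qed
    thus ?thesis unfolding E_def by (simp add: prod_zero_iff)
  qed
  ultimately show "c d0 = 0" by simp
qed

lemma span_analytic:
  fixes c :: "nat \<Rightarrow> real"
  assumes gi: "good_increment q"
    and hyp: "\<forall>n\<ge>1. (\<Sum>d<N. c d * pmf (conv_pow q n) (int d)) = 0"
  shows "\<forall>d<N. c d = 0"
proof -
  have int2: "integrable (measure_pmf q) (\<lambda>z. (real_of_int z)\<^sup>2)"
    and int1: "integrable (measure_pmf q) (\<lambda>z. real_of_int z)"
    and sym: "\<forall>z. pmf q z = pmf q (- z)"
    and gen: "int_subgroup_gen (set_pmf q) = UNIV"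
    using gi unfolding good_increment_def by auto
  define g where "g = (\<lambda>x. \<Sum>d<N. c d * cos (real d * x))"
  have cg: "continuous_on S g" for S unfolding g_def by (intro continuous_intros)
  have cphi: "continuous_on S (phi q)" for S by (rule phi_cont[OF int1])
  have seti: "integrable lborel (\<lambda>x. indicator {0..pi} x * f x)" if "continuous_on {0..pi} f" for f :: "real \<Rightarrow> real"
  proof -
    have "set_integrable lborel {0..pi} f" by (rule borel_integrable_atLeastAtMost'[OF that])
    thus ?thesis by (simp add: set_integrable_def)
  qed
  have S1: "integral\<^sup>L lborel (\<lambda>x. indicator {0..pi} x * (g x * phi q x ^ n)) = 0" if n1: "n \<ge> 1" for n
  proof -
    have "integral\<^sup>L lborel (\<lambda>x. indicator {0..pi} x * (g x * phi q x ^ n))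
        = integral\<^sup>L lborel (\<lambda>x. \<Sum>d<N. c d * (indicator {0..pi} x * (phi q x ^ n * cos (of_int (int d) * x))))"
      unfolding g_def by (simp add: sum_distrib_left sum_distrib_right mult_ac)
    also have "\<dots> = (\<Sum>d<N. integral\<^sup>L lborel (\<lambda>x. c d * (indicator {0..pi} x * (phi q x ^ n * cos (of_int (int d) * x)))))"
      by (rule Bochner_Integration.integral_sum) (auto intro!: integrable_mult_right seti continuous_intros cphi)
    also have "\<dots> = (\<Sum>d<N. c d * (pi * pmf (conv_pow q n) (int d)))"
    proof -
      have fc: "integral\<^sup>L lborel (\<lambda>x. indicator {0..pi} x * (phi q x ^ n * cos (real d * x))) = pi * pmf (conv_pow q n) (int d)" for d
        using fourier_coef[OF sym, of n "int d"] by simp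
      show ?thesis by (simp add: fc)
    qed
    also have "\<dots> = pi * (\<Sum>d<N. c d * pmf (conv_pow q n) (int d))"
      by (simp add: sum_distrib_left mult_ac)
    also have "\<dots> = 0" using hyp n1 by simp
    finally show ?thesis .
  qed
  have S2: "integral\<^sup>L lborel (\<lambda>x. indicator {0..pi} x * (g x * psi q x ^ t)) = 0" if t1: "t \<ge> 1" for t
  proof -
    have pw: "psi q x ^ t = (\<Sum>k\<le>t. real (t choose k) / 2 ^ t * phi q x ^ (t + k))" for x
    proof -
      have "psi q x ^ t = phi q x ^ t * (phi q x + 1) ^ t / 2 ^ t"
        unfolding psi_def by (simp add: power_divide power_mult_distrib add.commute)
      also have "(phi q x + 1) ^ t = (\<Sum>k\<le>t. real (t choose k) * phi q x ^ k)"
        by (subst binomial_ring) simp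
      finally show ?thesis
        by (simp add: sum_distrib_left sum_divide_distrib power_add mult_ac)
    qed
    have "integral\<^sup>L lborel (\<lambda>x. indicator {0..pi} x * (g x * psi q x ^ t))
        = integral\<^sup>L lborel (\<lambda>x. \<Sum>k\<le>t. real (t choose k) / 2 ^ t * (indicator {0..pi} x * (g x * phi q x ^ (t + k))))"
      unfolding pw by (simp add: sum_distrib_left mult_ac)
    also have "\<dots> = (\<Sum>k\<le>t. integral\<^sup>L lborel (\<lambda>x. real (t choose k) / 2 ^ t * (indicator {0..pi} x * (g x * phi q x ^ (t + k)))))"
      by (rule Bochner_Integration.integral_sum) (auto intro!: integrable_mult_right seti continuous_intros cphi cg)
    also have "\<dots> = 0"
      using S1 t1 by simp
    finally show ?thesis .
  qed
  define s2 where "s2 = measure_pmf.expectation q (\<lambda>z. (real_of_int z)\<^sup>2)"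
  have s2nn: "s2 \<ge> 0" unfolding s2_def by simp
  define C1 where "C1 = 3 * s2 / 4 + 1"
  have C1: "C1 > 0" unfolding C1_def using s2nn by simp
  have low: "1 - C1 * x\<^sup>2 \<le> psi q x" for x
  proof -
    define u where "u = 1 - phi q x"
    have u0: "0 \<le> u" "u \<le> 2" unfolding u_def using phi_le1[of q x] phi_ge[of q x] by auto
    have uu: "u \<le> s2 * x\<^sup>2 / 2" unfolding u_def s2_def using phi_lower[OF int2, of x] by simp
    have "psi q x = 1 - 3 * u / 2 + u\<^sup>2 / 2"
      unfolding psi_def u_def by (simp add: power2_eq_square field_simps)
    also have "\<dots> \<ge> 1 - 3 * u / 2" by simp
    finally have "psi q x \<ge> 1 - 3 * u / 2" .
    moreover have "3 * u / 2 \<le> C1 * x\<^sup>2"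
    proof -
      have "3 * u / 2 \<le> 3 * s2 / 4 * x\<^sup>2" using uu by simp
      also have "\<dots> \<le> C1 * x\<^sup>2" unfolding C1_def by (simp add: distrib_right)
      finally show ?thesis .
    qed
    ultimately show ?thesis by linarith
  qed
  have mom: "\<forall>j. (\<Sum>d<N. c d * real d ^ (2*j)) = 0"
  proof
    fix m
    show "(\<Sum>d<N. c d * real d ^ (2*m)) = 0"
    proof (induction m rule: less_induct)
      case (less m)
      hence prev: "\<forall>j<m. (\<Sum>d<N. c d * real d ^ (2*j)) = 0" by blast
      define \<kappa> where "\<kappa> = (-1) ^ m / fact (2*m) * (\<Sum>d<N. c d * real d ^ (2*m))"
      define B where "B = (\<Sum>d<N. \<bar>c d\<bar> * real d ^ (2*m+2)) / fact (2*m+2)"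
      have f1: "continuous_on {0..pi} g" by (rule cg)
      have f2: "continuous_on {0..pi} (psi q)" unfolding psi_def by (intro continuous_intros cphi) auto
      have f3: "\<And>t. t \<ge> 1 \<Longrightarrow> integral\<^sup>L lborel (\<lambda>x. indicator {0..pi} x * (g x * psi q x ^ t)) = 0"
        using S2 by blast
      have f4: "\<And>x. 0 \<le> x \<Longrightarrow> x \<le> pi \<Longrightarrow> \<bar>g x - \<kappa> * x ^ (2*m)\<bar> \<le> B * x ^ (2*m+2)"
        unfolding g_def \<kappa>_def B_def using g_taylor[OF prev] by simp
      have f5: "B \<ge> 0" unfolding B_def by (intro divide_nonneg_pos sum_nonneg) auto
      have f6: "\<And>x. 0 \<le> x \<Longrightarrow> x \<le> pi \<Longrightarrow> 1 - C1 * x\<^sup>2 \<le> psi q x" using low by blast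
      have f7: "\<And>\<eta>. 0 < \<eta> \<Longrightarrow> \<exists>\<rho><1. \<forall>x. \<eta> \<le> x \<longrightarrow> x \<le> pi \<longrightarrow> \<bar>psi q x\<bar> \<le> \<rho>"
        using psi_far[OF gen int1] by blast
      have "\<kappa> = 0" by (rule asym[OF f1 f2 f3 f4 f5 f6 C1 f7])
      thus ?case unfolding \<kappa>_def by simp
    qed
  qed
  from moments_zero[OF mom] show ?thesis .
qed




definition E :: "int \<Rightarrow> int \<Rightarrow> real" where
  "E d = (\<lambda>j. if \<bar>j\<bar> = d then 1 else 0)"

lemma span_kernels:
  assumes gi: "good_increment q" and d: "0 \<le> d" "d \<le> L"
  shows "\<exists>k\<in>kspan q. \<forall>j\<in>{-L..L}. k j = E d j"
proof -
  have sym: "\<forall>z. pmf q z = pmf q (- z)" using gi unfolding good_increment_def by auto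
  define N where "N = Suc (nat L)"
  define V where "V = {(\<lambda>i. pmf (conv_pow q n) (int i)) | n. n \<ge> 1}"
  have Vne: "V \<noteq> {}" unfolding V_def by auto
  have H: "\<forall>c. (\<forall>v\<in>V. (\<Sum>i<N. c i * v i) = 0) \<longrightarrow> (\<forall>i<N. c i = 0)"
  proof (rule allI, rule impI)
    fix c assume "\<forall>v\<in>V. (\<Sum>i<N. c i * v i) = 0"
    hence "\<forall>n\<ge>1. (\<Sum>i<N. c i * pmf (conv_pow q n) (int i)) = 0" unfolding V_def by auto
    thus "\<forall>i<N. c i = 0" by (rule span_analytic[OF gi])
  qed
  obtain w where w: "w \<in> lspan V" "\<forall>i<N. (if i = nat d then 1 else 0) = w i"
    using LA[OF Vne H, of "\<lambda>i. if i = nat d then 1 else 0"] by blast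
  have T: "(\<lambda>j. u (nat \<bar>j\<bar>)) \<in> kspan q" if "u \<in> lspan V" for u
    using that
  proof (induction rule: lspan.induct)
    case (base v)
    then obtain n where n: "n \<ge> 1" "v = (\<lambda>i. pmf (conv_pow q n) (int i))" unfolding V_def by auto
    have "(\<lambda>j. v (nat \<bar>j\<bar>)) = pmf (conv_pow q n)"
    proof
      fix j :: int
      show "v (nat \<bar>j\<bar>) = pmf (conv_pow q n) j"
        using n(2) conv_sym[OF sym, of n j] by (cases "j \<ge> 0") auto
    qed
    then show ?case using kspan.base[OF n(1)] by simp
  next
    case (lin u w a b)
    then show ?case using kspan.lin[OF lin.IH(1) lin.IH(2), of a b] by simp
  qed
  show ?thesis
  proof (intro bexI[OF _ T[OF w(1)]] ballI)
    fix j assume j: "j \<in> {-L..L}"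
    hence "nat \<bar>j\<bar> < N" unfolding N_def by auto
    hence "w (nat \<bar>j\<bar>) = (if nat \<bar>j\<bar> = nat d then 1 else 0)" using w(2) by metis
    also have "\<dots> = E d j" unfolding E_def using d by auto
    finally show "w (nat \<bar>j\<bar>) = E d j" .
  qed
qed

lemma Mt_E_eq:
  assumes gi: "good_increment q"
    and eqM: "\<And>ts. ts \<noteq> [] \<Longrightarrow> (\<forall>i\<in>set ts. i \<ge> 1) \<Longrightarrow>
     Mt \<theta> L (map (\<lambda>t. pmf (conv_pow q t)) ts) = Mt \<theta>' L (map (\<lambda>t. pmf (conv_pow q t)) ts)"
    and ds: "ds \<noteq> []" "set ds \<subseteq> {0..L}"
  shows "Mt \<theta> L (map E ds) = Mt \<theta>' L (map E ds)"
proof -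
  define KE where "KE = (\<lambda>d. SOME k. k \<in> kspan q \<and> (\<forall>j\<in>{-L..L}. k j = E d j))"
  have KE: "KE d \<in> kspan q \<and> (\<forall>j\<in>{-L..L}. KE d j = E d j)" if "d \<in> {0..L}" for d
  proof -
    have ex: "\<exists>k. k \<in> kspan q \<and> (\<forall>j\<in>{-L..L}. k j = E d j)"
      using span_kernels[OF gi, of d L] that by auto
    show ?thesis unfolding KE_def by (rule someI_ex[OF ex])
  qed
  have rel: "list_all2 (\<lambda>k k'. \<forall>j\<in>{-L..L}. k j = k' j) (map E ds) (map KE ds)"
    using ds(2) by (induction ds) (auto simp: KE)
  have "Mt \<theta> L (map E ds) = Mt \<theta> L (map KE ds)" by (rule Mt_cong[OF rel])
  also have "\<dots> = Mt \<theta>' L (map KE ds)"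
  proof -
    have "KE ` set ds \<subseteq> kspan q" using ds(2) KE by auto
    thus ?thesis using Mt_kspan[OF eqM, of "map KE ds" "[]"] ds by auto
  qed
  also have "\<dots> = Mt \<theta>' L (map E ds)" by (rule Mt_cong[OF rel, symmetric])
  finally show ?thesis .
qed

lemma sumE:
  assumes "0 \<le> d" "d \<le> L"
  shows "(\<Sum>j\<in>{-L..L}. E d j * h j) = (if d = 0 then h 0 else h d + h (- d))"
proof (cases "d = 0")
  case True
  have "(\<Sum>j\<in>{-L..L}. E d j * h j) = (\<Sum>j\<in>{-L..L}. if j = 0 then h 0 else 0)"
    by (intro sum.cong refl) (auto simp: E_def True)
  also have "\<dots> = h 0" using assms True by (subst sum.delta) auto
  finally show ?thesis using True by simp
next
  case False
  have "(\<Sum>j\<in>{-L..L}. E d j * h j) = (\<Sum>j\<in>{-L..L}. (if j = d then h d else 0) + (if j = - d then h (- d) else 0))"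
    by (intro sum.cong refl) (use False assms in \<open>auto simp: E_def\<close>)
  also have "\<dots> = h d + h (- d)" using assms False by (simp add: sum.distrib)
  finally show ?thesis using False by simp
qed

locale supp_ctx =
  fixes \<theta> :: "int \<Rightarrow> real" and a b L :: int
  assumes sup: "\<And>z. \<theta> z \<noteq> 0 \<Longrightarrow> a \<le> z \<and> z \<le> b"
    and ha: "\<theta> a \<noteq> 0" and hb: "\<theta> b \<noteq> 0"
    and Lab: "b - a = L"
    and fin: "finite {z. \<theta> z \<noteq> 0}"
begin

lemma out: "z < a \<or> z > b \<Longrightarrow> \<theta> z = 0"
  using sup by force

lemma Mc_out: "z < a \<or> z > b \<Longrightarrow> Mc \<theta> L ks z = 0"
  using out Mc_zero by blast

lemma McE1:
  assumes "0 \<le> i" "i \<le> L"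
  shows "Mc \<theta> L [E i] z = \<theta> z * (if i = 0 then \<theta> z else \<theta> (z + i) + \<theta> (z - i))"
  using sumE[OF assms, of "\<lambda>j. \<theta> (z + j)"] by simp

lemma McE1_b:
  assumes "0 \<le> i" "i \<le> L"
  shows "Mc \<theta> L [E i] b = \<theta> b * \<theta> (b - i)"
proof -
  have e: "Mc \<theta> L [E i] b = \<theta> b * (if i = 0 then \<theta> b else \<theta> (b + i) + \<theta> (b - i))" by (rule McE1[OF assms])
  show ?thesis
  proof (cases "i = 0")
    case False
    hence "\<theta> (b + i) = 0" using out[of "b + i"] assms by simp
    thus ?thesis using e False by simp
  qed (use e in simp)
qed

lemma McE1_a:
  assumes "0 \<le> i" "i \<le> L"
  shows "Mc \<theta> L [E i] a = \<theta> a * \<theta> (a + i)"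
proof -
  have e: "Mc \<theta> L [E i] a = \<theta> a * (if i = 0 then \<theta> a else \<theta> (a + i) + \<theta> (a - i))" by (rule McE1[OF assms])
  show ?thesis
  proof (cases "i = 0")
    case False
    hence "\<theta> (a - i) = 0" using out[of "a - i"] assms by simp
    thus ?thesis using e False by simp
  qed (use e in simp)
qed

lemma McEL_val:
  assumes L0: "L > 0"
  shows "Mc \<theta> L (E L # ks) z = (if z = a then \<theta> a * Mc \<theta> L ks b else if z = b then \<theta> b * Mc \<theta> L ks a else 0)"
proof -
  have e: "Mc \<theta> L (E L # ks) z = \<theta> z * (Mc \<theta> L ks (z + L) + Mc \<theta> L ks (z - L))"
    using sumE[of L L "\<lambda>j. Mc \<theta> L ks (z + j)"] L0 by simp
  show ?thesis
  proof (cases "z = a")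
    case True
    then show ?thesis using e Lab L0 Mc_out[of "a - L"] by (simp add: algebra_simps)
  next
    case False
    show ?thesis
    proof (cases "z = b")
      case True
      then show ?thesis using e Lab L0 Mc_out[of "b + L"] False by (simp add: algebra_simps)
    next
      case False2: False
      show ?thesis
      proof (cases "\<theta> z = 0")
        case True
        then show ?thesis using e False False2 by simp
      next
        case nz: False
        hence "a < z" "z < b" using sup[OF nz] False False2 by auto
        then show ?thesis using e False False2 Mc_out[of "z + L"] Mc_out[of "z - L"] Lab by auto
      qed
    qed
  qed
qed

lemma ab: "a \<noteq> b \<Longrightarrow> a \<in> {z. \<theta> z \<noteq> 0} \<and> b \<in> {z. \<theta> z \<noteq> 0}"
  using ha hb by auto

lemma sum_two:
  assumes "a \<noteq> b"
  shows "(\<Sum>z\<in>{z. \<theta> z \<noteq> 0}. if z = a then X else if z = b then Y else 0) = X + Y"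
proof -
  have "(\<Sum>z\<in>{z. \<theta> z \<noteq> 0}. if z = a then X else if z = b then Y else 0)
      = (\<Sum>z\<in>{z. \<theta> z \<noteq> 0}. (if z = a then X else 0) + (if z = b then Y else 0))"
    by (intro sum.cong refl) (use assms in auto)
  also have "\<dots> = X + Y" using fin ha hb by (simp add: sum.distrib)
  finally show ?thesis .
qed

lemma MtEL:
  assumes L0: "L > 0"
  shows "Mt \<theta> L (E L # ks) = \<theta> a * Mc \<theta> L ks b + \<theta> b * Mc \<theta> L ks a"
proof -
  have "a \<noteq> b" using Lab L0 by auto
  thus ?thesis unfolding Mt_def McEL_val[OF L0] by (rule sum_two)
qed

lemma Mt1:
  assumes L0: "L > 0"
  shows "Mt \<theta> L [E L] = 2 * (\<theta> a * \<theta> b)"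
  using MtEL[OF L0, of "[]"] by simp

lemma Mt2:
  assumes L0: "L > 0" and i: "0 \<le> i" "i \<le> L"
  shows "Mt \<theta> L [E L, E i] = \<theta> a * \<theta> b * (\<theta> (b - i) + \<theta> (a + i))"
proof -
  have "Mt \<theta> L [E L, E i] = \<theta> a * Mc \<theta> L [E i] b + \<theta> b * Mc \<theta> L [E i] a" by (rule MtEL[OF L0])
  also have "\<dots> = \<theta> a * (\<theta> b * \<theta> (b - i)) + \<theta> b * (\<theta> a * \<theta> (a + i))"
    by (simp only: McE1_a[OF i] McE1_b[OF i])
  finally show ?thesis by (simp add: algebra_simps)
qed

lemma shift_sum:
  assumes "a \<noteq> b"
  shows "(\<Sum>z\<in>{z. \<theta> z \<noteq> 0}. \<theta> z * (if z + s = a then X else if z + s = b then Y else 0))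
       = \<theta> (a - s) * X + \<theta> (b - s) * Y"
proof -
  have "(\<Sum>z\<in>{z. \<theta> z \<noteq> 0}. \<theta> z * (if z + s = a then X else if z + s = b then Y else 0))
      = (\<Sum>z\<in>{z. \<theta> z \<noteq> 0}. (if z = a - s then \<theta> (a - s) * X else 0) + (if z = b - s then \<theta> (b - s) * Y else 0))"
    by (intro sum.cong refl) (use assms in auto)
  also have "\<dots> = \<theta> (a - s) * X + \<theta> (b - s) * Y" using fin by (simp add: sum.distrib)
  finally show ?thesis .
qed

lemma Mt3:
  assumes L0: "L > 0" and i: "0 \<le> i" "i \<le> L" and j: "0 \<le> j" "j \<le> L"
  shows "Mt \<theta> L [E j, E L, E i]
       = \<theta> a * \<theta> b * (\<theta> (a + j) * \<theta> (b - i) + \<theta> (b - j) * \<theta> (a + i))"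
proof -
  have anb: "a \<noteq> b" using Lab L0 by auto
  define ga where "ga = \<theta> a * Mc \<theta> L [E i] b"
  define gb where "gb = \<theta> b * Mc \<theta> L [E i] a"
  define G where "G = (\<lambda>w. if w = a then ga else if w = b then gb else 0)"
  have G: "Mc \<theta> L [E L, E i] w = G w" for w unfolding G_def ga_def gb_def by (rule McEL_val[OF L0])
  have mc: "Mc \<theta> L [E j, E L, E i] z = \<theta> z * (if j = 0 then G z else G (z + j) + G (z - j))" for z
  proof -
    have "Mc \<theta> L [E j, E L, E i] z = \<theta> z * (\<Sum>j'\<in>{-L..L}. E j j' * Mc \<theta> L [E L, E i] (z + j'))"
      by (simp only: Mc.simps(2))
    also have "\<dots> = \<theta> z * (\<Sum>j'\<in>{-L..L}. E j j' * G (z + j'))" by (simp only: G)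
    also have "\<dots> = \<theta> z * (if j = 0 then G z else G (z + j) + G (z - j))"
      using sumE[OF j, of "\<lambda>j'. G (z + j')"] by simp
    finally show ?thesis .
  qed
  have sh: "(\<Sum>z\<in>{z. \<theta> z \<noteq> 0}. \<theta> z * G (z + s)) = \<theta> (a - s) * ga + \<theta> (b - s) * gb" for s
    unfolding G_def by (rule shift_sum[OF anb])
  have "Mt \<theta> L [E j, E L, E i] = \<theta> (a + j) * ga + \<theta> (b - j) * gb"
  proof (cases "j = 0")
    case True
    have "Mt \<theta> L [E j, E L, E i] = (\<Sum>z\<in>{z. \<theta> z \<noteq> 0}. \<theta> z * G (z + 0))"
      unfolding Mt_def mc using True by simp
    also have "\<dots> = \<theta> (a + j) * ga + \<theta> (b - j) * gb" using sh[of 0] True by simp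
    finally show ?thesis .
  next
    case False
    have "Mt \<theta> L [E j, E L, E i] = (\<Sum>z\<in>{z. \<theta> z \<noteq> 0}. \<theta> z * G (z + j)) + (\<Sum>z\<in>{z. \<theta> z \<noteq> 0}. \<theta> z * G (z + - j))"
      unfolding Mt_def mc using False by (simp add: sum.distrib distrib_left)
    also have "\<dots> = \<theta> (a - j) * ga + \<theta> (b - j) * gb + (\<theta> (a + j) * ga + \<theta> (b + j) * gb)"
      using sh[of j] sh[of "- j"] by simp
    also have "\<dots> = \<theta> (a + j) * ga + \<theta> (b - j) * gb"
      using out[of "a - j"] out[of "b + j"] False j by simp
    finally show ?thesis .
  qed
  also have "\<dots> = \<theta> a * \<theta> b * (\<theta> (a + j) * \<theta> (b - i) + \<theta> (b - j) * \<theta> (a + i))"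
    unfolding ga_def gb_def by (simp only: McE1_a[OF i] McE1_b[OF i]) (simp add: algebra_simps)
  finally show ?thesis .
qed

lemma Mt0:
  assumes L0: "L = 0"
  shows "Mt \<theta> L [E 0] = \<theta> a ^ 2"
proof -
  have S: "{z. \<theta> z \<noteq> 0} = {a}" using sup ha Lab L0 by force
  show ?thesis unfolding Mt_def S using sumE[of 0 L "\<lambda>j. \<theta> (a + j)"] L0
    by (simp add: power2_eq_square)
qed

end


lemma sign_lemma:
  fixes D D' :: "int \<Rightarrow> real"
  assumes "\<And>i j. i \<in> S \<Longrightarrow> j \<in> S \<Longrightarrow> D' j * D' i = D j * D i"
  shows "(\<forall>j\<in>S. D' j = D j) \<or> (\<forall>j\<in>S. D' j = - D j)"
proof (cases "\<forall>j\<in>S. D j = 0")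
  case True
  have "D' j = 0" if "j \<in> S" for j
    using assms[OF that that] True that by simp
  then show ?thesis using True by simp
next
  case False
  then obtain i0 where i0: "i0 \<in> S" "D i0 \<noteq> 0" by auto
  have "D' i0 * D' i0 = D i0 * D i0" using assms[OF i0(1) i0(1)] .
  hence "D' i0 = D i0 \<or> D' i0 = - D i0"
    by (metis minus_mult_minus square_eq_iff)
  then show ?thesis
  proof
    assume h: "D' i0 = D i0"
    have "D' j = D j" if "j \<in> S" for j
      using assms[OF i0(1) that] h i0(2) by simp
    thus ?thesis by simp
  next
    assume h: "D' i0 = - D i0"
    have "D' j = - D j" if "j \<in> S" for j
    proof -
      have "D' j * (- D i0) = D j * D i0" using assms[OF i0(1) that] h by simp
      hence "(D' j + D j) * D i0 = 0" by (simp add: algebra_simps)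
      thus ?thesis using i0(2) by simp
    qed
    thus ?thesis by simp
  qed
qed

lemma list_eq_shift:
  fixes \<theta> \<theta>' :: "int \<Rightarrow> real"
  assumes "b - a = L" "b' - a' = L" "0 \<le> L" "\<And>j. 0 \<le> j \<Longrightarrow> j \<le> L \<Longrightarrow> \<theta>' (a' + j) = \<theta> (a + j)"
  shows "map \<theta>' [a'..b'] = map \<theta> [a..b]"
proof (rule nth_equalityI)
  show "length (map \<theta>' [a'..b']) = length (map \<theta> [a..b])" using assms by simp
  fix i assume "i < length (map \<theta>' [a'..b'])"
  hence i: "i < nat (L + 1)" using assms by simp
  have "map \<theta>' [a'..b'] ! i = \<theta>' (a' + int i)" using i assms by (simp add: nth_upto)
  also have "\<dots> = \<theta> (a + int i)" using assms(4)[of "int i"] i by simp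
  also have "\<dots> = map \<theta> [a..b] ! i" using i assms by (simp add: nth_upto)
  finally show "map \<theta>' [a'..b'] ! i = map \<theta> [a..b] ! i" .
qed

lemma list_eq_rev:
  fixes \<theta> \<theta>' :: "int \<Rightarrow> real"
  assumes "b - a = L" "b' - a' = L" "0 \<le> L" "\<And>j. 0 \<le> j \<Longrightarrow> j \<le> L \<Longrightarrow> \<theta>' (a' + j) = \<theta> (b - j)"
  shows "map \<theta>' [a'..b'] = rev (map \<theta> [a..b])"
proof (rule nth_equalityI)
  show "length (map \<theta>' [a'..b']) = length (rev (map \<theta> [a..b]))" using assms by simp
  fix i assume "i < length (map \<theta>' [a'..b'])"
  hence i: "i < nat (L + 1)" using assms by simp
  have "map \<theta>' [a'..b'] ! i = \<theta>' (a' + int i)" using i assms by (simp add: nth_upto)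
  also have "\<dots> = \<theta> (b - int i)" using assms(4)[of "int i"] i by simp
  also have "\<dots> = rev (map \<theta> [a..b]) ! i"
  proof -
    have len: "length [a..b] = nat (L + 1)" using assms by simp
    have k: "nat (L + 1) - Suc i < nat (L + 1)" using i by simp
    have "rev (map \<theta> [a..b]) ! i = map \<theta> [a..b] ! (nat (L + 1) - Suc i)"
      using i len by (simp add: rev_nth)
    also have "\<dots> = \<theta> (a + int (nat (L + 1) - Suc i))" using k assms by (simp add: nth_upto)
    also have "a + int (nat (L + 1) - Suc i) = b - int i" using i assms by simp
    finally show ?thesis by simp
  qed
  finally show "map \<theta>' [a'..b'] ! i = rev (map \<theta> [a..b]) ! i" .
qed

theorem proposition4p1:
  fixes q :: "int pmf" and \<theta> \<theta>' :: "int \<Rightarrow> real"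
  assumes q: "good_increment q"
    and range: "\<And>z. 0 \<le> \<theta> z \<and> \<theta> z \<le> 1" "\<And>z. 0 \<le> \<theta>' z \<and> \<theta>' z \<le> 1"
    and fin: "finite {z. \<theta> z \<noteq> 0}" "finite {z. \<theta>' z \<noteq> 0}"
    and nz: "{z. \<theta> z \<noteq> 0} \<noteq> {}" "{z. \<theta>' z \<noteq> 0} \<noteq> {}"
    and len: "Max {z. \<theta> z \<noteq> 0} - Min {z. \<theta> z \<noteq> 0}
              = Max {z. \<theta>' z \<noteq> 0} - Min {z. \<theta>' z \<noteq> 0}"
    and eq: "\<And>t. t \<noteq> [] \<Longrightarrow> (\<forall>i\<in>set t. i \<ge> 1) \<Longrightarrow> p_theta q \<theta> t = p_theta q \<theta>' t"
  shows "map \<theta>' [Min {z. \<theta>' z \<noteq> 0} .. Max {z. \<theta>' z \<noteq> 0}]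
           \<in> { map \<theta> [Min {z. \<theta> z \<noteq> 0} .. Max {z. \<theta> z \<noteq> 0}],
               rev (map \<theta> [Min {z. \<theta> z \<noteq> 0} .. Max {z. \<theta> z \<noteq> 0}]) }"
proof -
  define a where "a = Min {z. \<theta> z \<noteq> 0}"
  define b where "b = Max {z. \<theta> z \<noteq> 0}"
  define a' where "a' = Min {z. \<theta>' z \<noteq> 0}"
  define b' where "b' = Max {z. \<theta>' z \<noteq> 0}"
  define L where "L = b - a"
  have L': "b' - a' = L" using len unfolding L_def a_def b_def a'_def b'_def by simp
  have ha: "\<theta> a \<noteq> 0" unfolding a_def using Min_in[OF fin(1) nz(1)] by simp
  have hb: "\<theta> b \<noteq> 0" unfolding b_def using Max_in[OF fin(1) nz(1)] by simp
  have ha': "\<theta>' a' \<noteq> 0" unfolding a'_def using Min_in[OF fin(2) nz(2)] by simp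
  have hb': "\<theta>' b' \<noteq> 0" unfolding b'_def using Max_in[OF fin(2) nz(2)] by simp
  have sup: "a \<le> z \<and> z \<le> b" if "\<theta> z \<noteq> 0" for z
    unfolding a_def b_def using that fin(1) by (auto intro: Min_le Max_ge)
  have sup': "a' \<le> z \<and> z \<le> b'" if "\<theta>' z \<noteq> 0" for z
    unfolding a'_def b'_def using that fin(2) by (auto intro: Min_le Max_ge)
  have L0: "0 \<le> L" using sup[OF ha] sup[OF hb] unfolding L_def by simp
  interpret C: supp_ctx \<theta> a b L by standard (use sup ha hb fin(1) L_def in auto)
  interpret C': supp_ctx \<theta>' a' b' L by standard (use sup' ha' hb' fin(2) L' in auto)
  have win: "window \<theta> L" unfolding window_def
  proof (intro allI impI)
    fix z w assume "\<theta> z \<noteq> 0" "\<theta> w \<noteq> 0"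
    from sup[OF this(1)] sup[OF this(2)] show "\<bar>z - w\<bar> \<le> L" unfolding L_def by linarith
  qed
  have win': "window \<theta>' L" unfolding window_def
  proof (intro allI impI)
    fix z w assume "\<theta>' z \<noteq> 0" "\<theta>' w \<noteq> 0"
    from sup'[OF this(1)] sup'[OF this(2)] show "\<bar>z - w\<bar> \<le> L" using L' by linarith
  qed
  have eqM: "Mt \<theta> L (map (\<lambda>t. pmf (conv_pow q t)) ts) = Mt \<theta>' L (map (\<lambda>t. pmf (conv_pow q t)) ts)"
    if "ts \<noteq> []" "\<forall>i\<in>set ts. i \<ge> 1" for ts
    using eq[OF that] p_theta_Mt[OF win fin(1)] p_theta_Mt[OF win' fin(2)] by simp
  have EQ: "Mt \<theta> L (map E ds) = Mt \<theta>' L (map E ds)" if "ds \<noteq> []" "set ds \<subseteq> {0..L}" for ds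
    by (rule Mt_E_eq[OF q eqM that]) auto
  have pos: "\<theta> a > 0" "\<theta> b > 0" "\<theta>' a' > 0" "\<theta>' b' > 0"
    using range ha hb ha' hb' by (auto simp: less_le)
  show ?thesis
  proof (cases "L = 0")
    case True
    have "\<theta> a ^ 2 = \<theta>' a' ^ 2"
      using EQ[of "[0]"] C.Mt0[OF True] C'.Mt0[OF True] True by simp
    hence e: "\<theta>' a' = \<theta> a" using pos by (simp add: power2_eq_iff_nonneg less_imp_le)
    have "map \<theta>' [a'..b'] = map \<theta> [a..b]"
      by (rule list_eq_shift[where L = L]) (use L_def L' L0 True e in auto)
    thus ?thesis unfolding a_def b_def a'_def b'_def by simp
  next
    case False
    hence Lp: "L > 0" using L0 by simp
    define P where "P = \<theta> a * \<theta> b"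
    define P' where "P' = \<theta>' a' * \<theta>' b'"
    have Ppos: "P > 0" unfolding P_def using pos by simp
    have PP: "P' = P"
      using EQ[of "[L]"] C.Mt1[OF Lp] C'.Mt1[OF Lp] L0 unfolding P_def P'_def by simp
    define x where "x = (\<lambda>j. \<theta> (a + j))"
    define y where "y = (\<lambda>j. \<theta> (b - j))"
    define x' where "x' = (\<lambda>j. \<theta>' (a' + j))"
    define y' where "y' = (\<lambda>j. \<theta>' (b' - j))"
    have S: "x' i + y' i = x i + y i" if i: "0 \<le> i" "i \<le> L" for i
    proof -
      have "P' * (y' i + x' i) = P * (y i + x i)"
        using EQ[of "[L, i]"] C.Mt2[OF Lp i] C'.Mt2[OF Lp i] i L0
        unfolding P_def P'_def x_def y_def x'_def y'_def by simp
      hence "P * (y' i + x' i) = P * (y i + x i)" using PP by simp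
      hence "y' i + x' i = y i + x i" using Ppos by simp
      thus ?thesis by simp
    qed
    have W: "x' j * y' i + y' j * x' i = x j * y i + y j * x i"
      if i: "0 \<le> i" "i \<le> L" and j: "0 \<le> j" "j \<le> L" for i j
    proof -
      have "P' * (x' j * y' i + y' j * x' i) = P * (x j * y i + y j * x i)"
        using EQ[of "[j, L, i]"] C.Mt3[OF Lp i j] C'.Mt3[OF Lp i j] i j L0
        unfolding P_def P'_def x_def y_def x'_def y'_def by simp
      thus ?thesis using PP Ppos by simp
    qed
    have DD: "(x' j - y' j) * (x' i - y' i) = (x j - y j) * (x i - y i)"
      if "i \<in> {0..L}" "j \<in> {0..L}" for i j
    proof -
      have "(x' j - y' j) * (x' i - y' i) = (x' j + y' j) * (x' i + y' i) - 2 * (x' j * y' i + y' j * x' i)"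
        by (simp add: algebra_simps)
      also have "\<dots> = (x j + y j) * (x i + y i) - 2 * (x j * y i + y j * x i)"
        using S[of i] S[of j] W[of i j] that by simp
      also have "\<dots> = (x j - y j) * (x i - y i)" by (simp add: algebra_simps)
      finally show ?thesis .
    qed
    from sign_lemma[of "{0..L}" "\<lambda>j. x' j - y' j" "\<lambda>j. x j - y j", OF DD]
    show ?thesis
    proof
      assume h: "\<forall>j\<in>{0..L}. x' j - y' j = x j - y j"
      have "\<theta>' (a' + j) = \<theta> (a + j)" if "0 \<le> j" "j \<le> L" for j
      proof -
        have "x' j = x j" using h S[OF that] that by force
        thus ?thesis unfolding x_def x'_def .
      qed
      hence "map \<theta>' [a'..b'] = map \<theta> [a..b]"
        by (intro list_eq_shift[where L = L]) (use L_def L' L0 in auto)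
      thus ?thesis unfolding a_def b_def a'_def b'_def by simp
    next
      assume h: "\<forall>j\<in>{0..L}. x' j - y' j = - (x j - y j)"
      have "\<theta>' (a' + j) = \<theta> (b - j)" if "0 \<le> j" "j \<le> L" for j
      proof -
        have "x' j = y j" using h S[OF that] that by force
        thus ?thesis unfolding y_def x'_def .
      qed
      hence "map \<theta>' [a'..b'] = rev (map \<theta> [a..b])"
        by (intro list_eq_rev[where L = L]) (use L_def L' L0 in auto)
      thus ?thesis unfolding a_def b_def a'_def b'_def by simp
    qed
  qed
qed


end
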